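(* Let $0<\alpha<\beta<1$ and let $p$ be a $1$-periodic measurable function on $\mathbb{R}$ with $p>0$ and $p,p^{-1}\in L^\infty(0,1)$. For each $k\in\mathbb{N}$, the eigenvalue $\lambda_k(\theta)$ of $A(\theta)$ is a continuous function of $\theta\in[0,1)$.
   Context: $Q=(0,1)$, $Q_0=(\alpha,\beta)$, $Q_1=(0,\alpha)\cup(\beta,1)$. For $\theta\in[0,1)$, $H^1_\theta(Q)=\{u\in H^1(0,1):u(1)=e^{2\pi i\theta}u(0)\}$ and $V(\theta)=\{v\in H^1_\theta(Q):p v'=0\text{ a.e. on }Q_1\}$. $A(\theta)$ is the self-adjoint operator in the $L^2(Q)$-closure of $V(\theta)$ associated with the closed form $(u,\varphi)\mapsto\int_{Q_0}p\,u'\overline{\varphi'}\,dy$ on $V(\theta)$; its spectrum is discrete, and $\lambda_1(\theta)\le\lambda_2(\theta)\le\dots$ are its eigenvalues counted with multiplicity, equivalently $\lambda_k(\theta)=\inf_{F\subset V(\theta),\,\dim F=k}\ \sup_{u\in F\setminus\{0\}}\int_{Q_0}p|u'|^2dy\big/\|u\|^2_{L^2(Q)}$. *)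

theory Defs
  imports "HOL-Analysis.Analysis"
begin

text \<open>H^1(0,1) (complex valued), via absolute continuity: u is H^1 on [0,1] with weak
  derivative g iff g is square integrable on (0,1) and u(x) = u(0) + int_0^x g for x in [0,1].\<close>
definition is_H1_deriv :: "(real \<Rightarrow> complex) \<Rightarrow> (real \<Rightarrow> complex) \<Rightarrow> bool" where
  "is_H1_deriv u g \<longleftrightarrow>
     g \<in> borel_measurable lebesgue \<and>
     set_integrable lebesgue {0..1} g \<and>
     set_integrable lebesgue {0..1} (\<lambda>x. (cmod (g x))^2) \<and>
     (\<forall>x\<in>{0..1}. u x = u 0 + set_lebesgue_integral lebesgue {0..x} g)"

definition h1_deriv :: "(real \<Rightarrow> complex) \<Rightarrow> (real \<Rightarrow> complex)" where
  "h1_deriv u = (SOME g. is_H1_deriv u g)"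

text \<open>H^1_theta(Q); functions are normalised to vanish outside [0,1] so that they are
  determined by their values on [0,1].\<close>
definition H1_theta :: "real \<Rightarrow> (real \<Rightarrow> complex) set" where
  "H1_theta \<theta> = {u. (\<exists>g. is_H1_deriv u g) \<and> (\<forall>x. x \<notin> {0..1} \<longrightarrow> u x = 0) \<and>
                     u 1 = exp (2 * of_real pi * \<i> * of_real \<theta>) * u 0}"

definition Q1 :: "real \<Rightarrow> real \<Rightarrow> real set" where
  "Q1 \<alpha> \<beta> = {0<..<\<alpha>} \<union> {\<beta><..<1}"

definition Vspace :: "(real \<Rightarrow> real) \<Rightarrow> real \<Rightarrow> real \<Rightarrow> real \<Rightarrow> (real \<Rightarrow> complex) set" where
  "Vspace p \<alpha> \<beta> \<theta> = {u \<in> H1_theta \<theta>. \<exists>g. is_H1_deriv u g \<and>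
        (AE x in lebesgue. x \<in> Q1 \<alpha> \<beta> \<longrightarrow> of_real (p x) * g x = 0)}"

definition energy :: "(real \<Rightarrow> real) \<Rightarrow> real \<Rightarrow> real \<Rightarrow> (real \<Rightarrow> complex) \<Rightarrow> real" where
  "energy p \<alpha> \<beta> u = set_lebesgue_integral lebesgue {\<alpha><..<\<beta>} (\<lambda>x. p x * (cmod (h1_deriv u x))^2)"

definition L2_norm_sq :: "(real \<Rightarrow> complex) \<Rightarrow> real" where
  "L2_norm_sq u = set_lebesgue_integral lebesgue {0<..<1} (\<lambda>x. (cmod (u x))^2)"

definition rayleigh :: "(real \<Rightarrow> real) \<Rightarrow> real \<Rightarrow> real \<Rightarrow> (real \<Rightarrow> complex) \<Rightarrow> real" where
  "rayleigh p \<alpha> \<beta> u = energy p \<alpha> \<beta> u / L2_norm_sq u"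

text \<open>Min-max characterisation: lambda_k(theta) = inf over k-dimensional subspaces F of V(theta)
  (spanned by k linearly independent elements us 0, ..., us (k-1)) of the sup of the Rayleigh
  quotient over nonzero elements of F.\<close>
definition eigenvalue :: "(real \<Rightarrow> real) \<Rightarrow> real \<Rightarrow> real \<Rightarrow> real \<Rightarrow> nat \<Rightarrow> real" where
  "eigenvalue p \<alpha> \<beta> \<theta> k =
     Inf {Sup {rayleigh p \<alpha> \<beta> (\<lambda>x. \<Sum>j<k. c j * us j x) | c :: nat \<Rightarrow> complex. \<exists>j<k. c j \<noteq> 0}
          | us :: nat \<Rightarrow> real \<Rightarrow> complex.
            (\<forall>j<k. us j \<in> Vspace p \<alpha> \<beta> \<theta>) \<and>
            (\<forall>c :: nat \<Rightarrow> complex. (\<forall>x. (\<Sum>j<k. c j * us j x) = 0) \<longrightarrow> (\<forall>j<k. c j = 0))}"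

end

theory Submission
  imports Defs
begin

lemma sf_leb: "sigma_finite_measure (lebesgue :: real measure)"
proof
  show "\<exists>A. countable A \<and> A \<subseteq> sets (lebesgue::real measure) \<and> \<Union> A = space lebesgue \<and> (\<forall>a\<in>A. emeasure lebesgue a \<noteq> \<infinity>)"
  proof (intro exI[of _ "range (\<lambda>n::nat. {-real n..real n})"] conjI)
    show "\<Union> (range (\<lambda>n::nat. {-real n..real n})) = space lebesgue"
    proof (auto)
      fix x :: real
      obtain n :: nat where "\<bar>x\<bar> \<le> real n" using real_arch_simple by blast
      then show "\<exists>n::nat. - real n \<le> x \<and> x \<le> real n" by (intro exI[of _ n]) auto
    qed
  qed auto
qed

lemma Z_borel:
  fixes F :: "real \<Rightarrow> complex"
  assumes F: "integrable lebesgue F"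
    and tot: "integral\<^sup>L lebesgue F = 0"
    and gen: "\<And>x. set_lebesgue_integral lebesgue {x<..} F = 0"
    and A: "A \<in> sets borel"
  shows "set_lebesgue_integral lebesgue A F = 0"
proof -
  have st: "Int_stable (range (greaterThan :: real \<Rightarrow> real set))"
    unfolding Int_stable_def by (auto intro: image_eqI[of _ _ "max _ _"])
  have cl: "range (greaterThan :: real \<Rightarrow> real set) \<subseteq> Pow UNIV" by auto
  have "A \<in> sigma_sets UNIV (range greaterThan)"
    using A unfolding borel_Ioi by simp
  with st cl show ?thesis
  proof (induction rule: sigma_sets_induct_disjoint)
    case (basic A) then show ?case using gen by auto
  next
    case empty then show ?case by (simp add: set_lebesgue_integral_def)
  next
    case (compl A)
    then have Ab: "A \<in> sets borel" unfolding borel_Ioi by simp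
    then have Al: "A \<in> sets lebesgue" by simp
    have "set_lebesgue_integral lebesgue (UNIV - A) F
        = integral\<^sup>L lebesgue F - set_lebesgue_integral lebesgue A F"
    proof -
      have i1: "integrable lebesgue (\<lambda>x. indicat_real A x *\<^sub>R F x)"
        using integrable_mult_indicator[OF Al F] by simp
      have "(\<lambda>x. indicat_real (UNIV - A) x *\<^sub>R F x) = (\<lambda>x. F x - indicat_real A x *\<^sub>R F x)"
        by (auto simp: indicator_def)
      then show ?thesis unfolding set_lebesgue_integral_def
        using Bochner_Integration.integral_diff[OF F i1] by simp
    qed
    then show ?case using compl tot by simp
  next
    case (union A)
    then have Ab: "\<And>i. A i \<in> sets borel" unfolding borel_Ioi by auto
    then have Al: "\<And>i. A i \<in> sets lebesgue" by simp
    have "(\<Union>i. A i) \<in> sets lebesgue" using Al by auto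
    then have si: "set_integrable lebesgue (\<Union>i. A i) F"
      unfolding set_integrable_def using integrable_mult_indicator[OF _ F] by blast
    have "set_lebesgue_integral lebesgue (\<Union>i. A i) F = (\<Sum>i. set_lebesgue_integral lebesgue (A i) F)"
      by (rule lebesgue_integral_countable_add[OF Al _ si])
        (use union(1) in \<open>auto simp: disjoint_family_on_def\<close>)
    then show ?case using union by simp
  qed
qed

lemma Z_lebesgue:
  fixes F :: "real \<Rightarrow> complex"
  assumes F: "integrable lebesgue F"
    and tot: "integral\<^sup>L lebesgue F = 0"
    and gen: "\<And>x. set_lebesgue_integral lebesgue {x<..} F = 0"
  shows "AE x in lebesgue. F x = 0"
proof (rule sigma_finite_measure.density_zero[OF sf_leb F])
  fix A :: "real set" assume "A \<in> sets lebesgue"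
  then obtain S N N' :: "real set" where SN: "A = S \<union> N" "N \<subseteq> N'" "N' \<in> null_sets lborel" "S \<in> sets borel"
    by (auto elim: sets_completionE)
  have "AE x in lebesgue. (x::real) \<notin> N'"
    using SN(3) by (simp add: AE_not_in null_sets_completionI)
  then have "AE x in lebesgue. indicat_real A x *\<^sub>R F x = indicat_real S x *\<^sub>R F x"
    by eventually_elim (use SN in \<open>auto simp: indicator_def\<close>)
  have "set_lebesgue_integral lebesgue A F = set_lebesgue_integral lebesgue S F"
  proof -
    have S: "S \<in> sets lebesgue" using SN(4) by simp
    show ?thesis unfolding set_lebesgue_integral_def
      by (rule integral_cong_AE[OF _ _ \<open>AE x in lebesgue. _ = _\<close>])
        (use borel_measurable_integrable[OF integrable_mult_indicator[OF \<open>A \<in> sets lebesgue\<close> F]]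
           borel_measurable_integrable[OF integrable_mult_indicator[OF S F]] in auto)
  qed
  also have "\<dots> = 0" by (rule Z_borel[OF F tot gen SN(4)])
  finally show "set_lebesgue_integral lebesgue A F = 0" .
qed

lemma set_integral_split01:
  fixes f :: "real \<Rightarrow> complex"
  assumes f: "set_integrable lebesgue {0..1} f" and x: "0 \<le> x" "x \<le> 1"
  shows "set_lebesgue_integral lebesgue {0..1} f
       = set_lebesgue_integral lebesgue {0..x} f + set_lebesgue_integral lebesgue {x<..1} f"
proof -
  have e: "{0..1} = {0..x} \<union> {x<..1::real}" using x by auto
  have "set_lebesgue_integral lebesgue ({0..x} \<union> {x<..1}) f
       = set_lebesgue_integral lebesgue {0..x} f + set_lebesgue_integral lebesgue {x<..1} f"
    using x by (intro set_integral_Un) (auto intro!: set_integrable_subset[OF f])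
  then show ?thesis using e by simp
qed

lemma int_zero_ae:
  fixes f :: "real \<Rightarrow> complex"
  assumes f: "set_integrable lebesgue {0..1} f"
    and z: "\<And>x. x \<in> {0..1} \<Longrightarrow> set_lebesgue_integral lebesgue {0..x} f = 0"
  shows "AE x in lebesgue. x \<in> {0..1} \<longrightarrow> f x = 0"
proof -
  define F where "F x = indicat_real {0..1} x *\<^sub>R f x" for x
  have F: "integrable lebesgue F" using f unfolding F_def set_integrable_def .
  have tot: "integral\<^sup>L lebesgue F = 0"
    using z[of 1] unfolding F_def set_lebesgue_integral_def by simp
  have gen: "set_lebesgue_integral lebesgue {x<..} F = 0" for x
  proof -
    have "set_lebesgue_integral lebesgue {x<..} F = set_lebesgue_integral lebesgue ({x<..} \<inter> {0..1}) f"
      unfolding F_def set_lebesgue_integral_def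
      by (rule Bochner_Integration.integral_cong) (simp_all split: split_indicator)
    also have "\<dots> = 0"
    proof (cases "x < 0")
      case True
      then have "{x<..} \<inter> {0..1} = {0..1::real}" by auto
      moreover have "set_lebesgue_integral lebesgue {0..1} f = 0" using z[of 1] by simp
      ultimately show ?thesis by simp
    next
      case False
      show ?thesis
      proof (cases "x < 1")
        case True
        then have "{x<..} \<inter> {0..1} = {x<..1::real}" using False by auto
        moreover have "set_lebesgue_integral lebesgue {0..1} f = 0" using z[of 1] by simp
        moreover have "set_lebesgue_integral lebesgue {0..x} f = 0" using z[of x] False True by simp
        moreover note set_integral_split01[OF f, of x]
        ultimately show ?thesis using False True by simp
      next
        case False
        then have "{x<..} \<inter> {0..1} = ({}::real set)" by auto
        then show ?thesis by (simp add: set_lebesgue_integral_def)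
      qed
    qed
    finally show ?thesis .
  qed
  have "AE x in lebesgue. F x = 0" by (rule Z_lebesgue[OF F tot gen])
  then show ?thesis
  proof eventually_elim
    case (elim x) then show ?case by (simp add: F_def indicator_def)
  qed
qed

lemma H1_meas: "is_H1_deriv u g \<Longrightarrow> g \<in> borel_measurable lebesgue"
  unfolding is_H1_deriv_def by blast
lemma H1_int: "is_H1_deriv u g \<Longrightarrow> set_integrable lebesgue {0..1} g"
  unfolding is_H1_deriv_def by blast
lemma H1_sq: "is_H1_deriv u g \<Longrightarrow> set_integrable lebesgue {0..1} (\<lambda>x. (cmod (g x))^2)"
  unfolding is_H1_deriv_def by blast
lemma H1_eq: "is_H1_deriv u g \<Longrightarrow> x \<in> {0..1} \<Longrightarrow> u x = u 0 + set_lebesgue_integral lebesgue {0..x} g"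
  unfolding is_H1_deriv_def by blast
lemma H1_intro:
  assumes "g \<in> borel_measurable lebesgue" "set_integrable lebesgue {0..1} g"
    "set_integrable lebesgue {0..1} (\<lambda>x. (cmod (g x))^2)"
    "\<And>x. x \<in> {0..1} \<Longrightarrow> u x = u 0 + set_lebesgue_integral lebesgue {0..x} g"
  shows "is_H1_deriv u g"
  unfolding is_H1_deriv_def using assms by blast

lemma deriv_unique:
  assumes "is_H1_deriv u g" "is_H1_deriv u h"
  shows "AE x in lebesgue. x \<in> {0..1} \<longrightarrow> g x = h x"
proof -
  have g: "set_integrable lebesgue {0..1} g" and h: "set_integrable lebesgue {0..1} h"
    using assms by (auto intro: H1_int)
  have "AE x in lebesgue. x \<in> {0..1} \<longrightarrow> g x - h x = 0"
  proof (rule int_zero_ae)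
    show "set_integrable lebesgue {0..1} (\<lambda>x. g x - h x)"
      using g h by (rule set_integral_diff(1))
    fix x :: real assume x: "x \<in> {0..1}"
    have gx: "set_integrable lebesgue {0..x} g" and hx: "set_integrable lebesgue {0..x} h"
      using x by (auto intro: set_integrable_subset[OF g] set_integrable_subset[OF h])
    have "set_lebesgue_integral lebesgue {0..x} g = set_lebesgue_integral lebesgue {0..x} h"
    proof -
      have "u x = u 0 + set_lebesgue_integral lebesgue {0..x} g"
        using assms(1) x by (rule H1_eq)
      moreover have "u x = u 0 + set_lebesgue_integral lebesgue {0..x} h"
        using assms(2) x by (rule H1_eq)
      ultimately show ?thesis by simp
    qed
    then show "set_lebesgue_integral lebesgue {0..x} (\<lambda>x. g x - h x) = 0"
      using set_integral_diff(2)[OF gx hx] by simp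
  qed
  then show ?thesis by eventually_elim auto
qed

lemma cmod_sq_add_le: "(cmod (a + b))^2 \<le> 2 * (cmod a)^2 + 2 * (cmod b)^2"
proof -
  have "cmod (a + b) \<le> cmod a + cmod b" by (rule norm_triangle_ineq)
  then have "(cmod (a + b))^2 \<le> (cmod a + cmod b)^2"
    by (simp add: power_mono)
  also have "\<dots> \<le> 2 * (cmod a)^2 + 2 * (cmod b)^2"
    by (smt (verit) power2_sum sum_squares_bound)
  finally show ?thesis .
qed

lemma H1_lin:
  assumes u: "is_H1_deriv u g" and v: "is_H1_deriv v h"
  shows "is_H1_deriv (\<lambda>x. a * u x + b * v x) (\<lambda>x. a * g x + b * h x)"
proof (rule H1_intro)
  have [measurable]: "g \<in> borel_measurable lebesgue" "h \<in> borel_measurable lebesgue"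
    using u v by (auto intro: H1_meas)
  show "(\<lambda>x. a * g x + b * h x) \<in> borel_measurable lebesgue" by measurable
  have gi: "set_integrable lebesgue {0..1} g" and hi: "set_integrable lebesgue {0..1} h"
    using u v by (auto intro: H1_int)
  show "set_integrable lebesgue {0..1} (\<lambda>x. a * g x + b * h x)"
    using gi hi by (intro set_integral_add(1) set_integrable_mult_right)
  have gs: "set_integrable lebesgue {0..1} (\<lambda>x. (cmod (g x))^2)"
    and hs: "set_integrable lebesgue {0..1} (\<lambda>x. (cmod (h x))^2)"
    using u v by (auto intro: H1_sq)
  have bnd: "set_integrable lebesgue {0..1} (\<lambda>x. 2 * (cmod a)^2 * (cmod (g x))^2 + 2 * (cmod b)^2 * (cmod (h x))^2)"
    using gs hs by (intro set_integral_add(1) set_integrable_mult_right)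
  show "set_integrable lebesgue {0..1} (\<lambda>x. (cmod (a * g x + b * h x))^2)"
  proof (rule set_integrable_bound[OF bnd])
    show "set_borel_measurable lebesgue {0..1} (\<lambda>x. (cmod (a * g x + b * h x))^2)"
      unfolding set_borel_measurable_def
      by (intro borel_measurable_scaleR borel_measurable_indicator borel_measurable_power
          borel_measurable_norm borel_measurable_add borel_measurable_times borel_measurable_const) auto
    show "AE x in lebesgue. x \<in> {0..1} \<longrightarrow> norm ((cmod (a * g x + b * h x))^2)
        \<le> norm (2 * (cmod a)^2 * (cmod (g x))^2 + 2 * (cmod b)^2 * (cmod (h x))^2)"
    proof (intro AE_I2 impI)
      fix x :: real
      have "(cmod (a * g x + b * h x))^2 \<le> 2 * (cmod (a * g x))^2 + 2 * (cmod (b * h x))^2"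
        by (rule cmod_sq_add_le)
      also have "\<dots> = 2 * (cmod a)^2 * (cmod (g x))^2 + 2 * (cmod b)^2 * (cmod (h x))^2"
        by (simp add: norm_mult power_mult_distrib)
      finally show "norm ((cmod (a * g x + b * h x))^2)
        \<le> norm (2 * (cmod a)^2 * (cmod (g x))^2 + 2 * (cmod b)^2 * (cmod (h x))^2)"
        by simp
    qed
  qed
  fix x :: real assume x: "x \<in> {0..1}"
  have gx: "set_integrable lebesgue {0..x} g" and hx: "set_integrable lebesgue {0..x} h"
    using x by (auto intro!: set_integrable_subset[OF gi] set_integrable_subset[OF hi])
  have "a * u x + b * v x = a * (u 0 + set_lebesgue_integral lebesgue {0..x} g)
      + b * (v 0 + set_lebesgue_integral lebesgue {0..x} h)"
    using H1_eq[OF u x] H1_eq[OF v x] by simp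
  also have "\<dots> = (a * u 0 + b * v 0) + set_lebesgue_integral lebesgue {0..x} (\<lambda>x. a * g x + b * h x)"
    using gx hx by (simp add: set_integral_add(2) set_integrable_mult_right algebra_simps)
  finally show "a * u x + b * v x = (a * u 0 + b * v 0) + set_lebesgue_integral lebesgue {0..x} (\<lambda>x. a * g x + b * h x)" .
qed

lemma H1_zero: "is_H1_deriv (\<lambda>x. 0) (\<lambda>x. 0)"
  by (rule H1_intro) (auto simp: set_integrable_def)

lemma H1_sum:
  fixes k :: nat
  shows "(\<forall>j<k. is_H1_deriv (us j) (gs j)) \<Longrightarrow>
   is_H1_deriv (\<lambda>x. \<Sum>j<k. c j * us j x) (\<lambda>x. \<Sum>j<k. c j * gs j x)"
proof (induction k)
  case 0 then show ?case using H1_zero by simp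
next
  case (Suc k)
  have "is_H1_deriv (\<lambda>x. 1 * (\<Sum>j<k. c j * us j x) + c k * us k x) (\<lambda>x. 1 * (\<Sum>j<k. c j * gs j x) + c k * gs k x)"
    by (rule H1_lin) (use Suc in auto)
  then show ?case by simp
qed

lemma H1_cont:
  assumes u: "is_H1_deriv u g"
  shows "continuous_on {0..1} u"
proof -
  have gi: "set_integrable lebesgue {0..1} g" using u by (rule H1_int)
  have "g integrable_on {0..1}" using set_lebesgue_integral_eq_integral(1)[OF gi] .
  then have c: "continuous_on {0..1} (\<lambda>x. u 0 + integral {0..x} g)"
    by (intro continuous_intros indefinite_integral_continuous_1)
  show ?thesis
  proof (rule continuous_on_eq[OF c])
    fix x :: real assume x: "x \<in> {0..1}"
    have gx: "set_integrable lebesgue {0..x} g"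
      using x by (auto intro!: set_integrable_subset[OF gi])
    show "u 0 + integral {0..x} g = u x"
      using H1_eq[OF u x] set_lebesgue_integral_eq_integral(2)[OF gx] by simp
  qed
qed

lemma H1_L2_int:
  assumes u: "is_H1_deriv u g"
  shows "set_integrable lebesgue {0<..<1} (\<lambda>x. (cmod (u x))^2)"
proof -
  have "continuous_on {0..1} (\<lambda>x. (cmod (u x))^2)"
    using H1_cont[OF u] by (intro continuous_intros)
  then have "set_integrable lebesgue {0..1} (\<lambda>x. (cmod (u x))^2)"
    by (rule absolutely_integrable_continuous_real)
  then show ?thesis by (rule set_integrable_subset) auto
qed

lemma L2_nonneg: "L2_norm_sq u \<ge> 0"
  unfolding L2_norm_sq_def set_lebesgue_integral_def
  by (intro Bochner_Integration.integral_nonneg) auto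

lemma L2_pos:
  assumes u: "is_H1_deriv u g" and x0: "x0 \<in> {0..1}" "u x0 \<noteq> 0"
  shows "L2_norm_sq u > 0"
proof -
  have c: "continuous_on {0..1} (\<lambda>x. (cmod (u x))^2)"
    using H1_cont[OF u] by (intro continuous_intros)
  have "L2_norm_sq u = integral {0<..<1} (\<lambda>x. (cmod (u x))^2)"
    unfolding L2_norm_sq_def by (rule set_lebesgue_integral_eq_integral(2)[OF H1_L2_int[OF u]])
  also have "\<dots> = integral {0..1} (\<lambda>x. (cmod (u x))^2)"
    by (simp add: integral_open_interval_real)
  finally have e: "L2_norm_sq u = integral {0..1} (\<lambda>x. (cmod (u x))^2)" .
  have "integral {0..1} (\<lambda>x. (cmod (u x))^2) \<noteq> 0"
    using integral_eq_0_iff[OF c, of] x0 by auto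
  moreover have "integral {0..1} (\<lambda>x. (cmod (u x))^2) \<ge> 0"
    by (intro integral_nonneg integrable_continuous_real c) auto
  ultimately show ?thesis using e by linarith
qed

lemma energy_nonneg:
  assumes "\<forall>x. p x > 0"
  shows "energy p \<alpha> \<beta> u \<ge> 0"
  unfolding energy_def set_lebesgue_integral_def
proof (intro Bochner_Integration.integral_nonneg)
  fix x
  have "p x > 0" using assms by blast
  then show "0 \<le> indicat_real {\<alpha><..<\<beta>} x *\<^sub>R (p x * (cmod (h1_deriv u x))\<^sup>2)"
    by (simp add: indicator_def)
qed

lemma energy_eq:
  assumes u: "is_H1_deriv u g" and ab: "0 \<le> \<alpha>" "\<beta> \<le> 1"
    and pm: "p \<in> borel_measurable lebesgue"
  shows "energy p \<alpha> \<beta> u = set_lebesgue_integral lebesgue {\<alpha><..<\<beta>} (\<lambda>x. p x * (cmod (g x))^2)"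
proof -
  have ex: "\<exists>g. is_H1_deriv u g" using u by blast
  have h: "is_H1_deriv u (h1_deriv u)"
    unfolding h1_deriv_def by (rule someI_ex[OF ex])
  have ae: "AE x in lebesgue. x \<in> {0..1} \<longrightarrow> h1_deriv u x = g x"
    by (rule deriv_unique[OF h u])
  show ?thesis
    unfolding energy_def
  proof (rule set_lebesgue_integral_cong_AE)
    show "AE x in lebesgue. x \<in> {\<alpha><..<\<beta>} \<longrightarrow> p x * (cmod (h1_deriv u x))^2 = p x * (cmod (g x))^2"
      using ae by eventually_elim (use ab in auto)
    have [measurable]: "g \<in> borel_measurable lebesgue" "h1_deriv u \<in> borel_measurable lebesgue"
      using H1_meas[OF u] H1_meas[OF h] by auto
    note pm[measurable]
    show "(\<lambda>x. p x * (cmod (h1_deriv u x))^2) \<in> borel_measurable lebesgue" by measurable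
    show "(\<lambda>x. p x * (cmod (g x))^2) \<in> borel_measurable lebesgue" by measurable
  qed simp
qed

lemma AE_ne: "AE x in lebesgue. (x::real) \<noteq> c"
proof -
  have "{c} \<in> null_sets lebesgue" by simp
  from AE_not_in[OF this] show ?thesis by simp
qed

definition om :: "real \<Rightarrow> complex" where
  "om t = exp (2 * of_real pi * \<i> * of_real t)"

lemma om_add: "om (a + b) = om a * om b"
  unfolding om_def by (simp add: distrib_left exp_add[symmetric] algebra_simps)

lemma om_nz: "om t \<noteq> 0" unfolding om_def by simp

lemma V_elim:
  assumes u: "u \<in> Vspace p \<alpha> \<beta> \<theta>" and p: "\<forall>x. p x > 0"
  obtains g where "is_H1_deriv u g" "AE x in lebesgue. x \<in> Q1 \<alpha> \<beta> \<longrightarrow> g x = 0"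
    "\<forall>x. x \<notin> {0..1} \<longrightarrow> u x = 0" "u 1 = om \<theta> * u 0"
proof -
  from u obtain g where g: "is_H1_deriv u g"
    and ae: "AE x in lebesgue. x \<in> Q1 \<alpha> \<beta> \<longrightarrow> of_real (p x) * g x = 0"
    and h: "u \<in> H1_theta \<theta>"
    unfolding Vspace_def by blast
  have "AE x in lebesgue. x \<in> Q1 \<alpha> \<beta> \<longrightarrow> g x = 0"
    using ae
  proof eventually_elim
    case (elim x)
    have "p x \<noteq> 0" using p by (metis less_irrefl)
    then show ?case using elim by auto
  qed
  moreover have "\<forall>x. x \<notin> {0..1} \<longrightarrow> u x = 0" "u 1 = om \<theta> * u 0"
    using h unfolding H1_theta_def om_def by auto
  ultimately show ?thesis using that g by blast
qed

lemma V_intro: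
  assumes "is_H1_deriv u g" "AE x in lebesgue. x \<in> Q1 \<alpha> \<beta> \<longrightarrow> g x = 0"
    "\<forall>x. x \<notin> {0..1} \<longrightarrow> u x = 0" "u 1 = om \<theta> * u 0"
  shows "u \<in> Vspace p \<alpha> \<beta> \<theta>"
proof -
  have "u \<in> H1_theta \<theta>" using assms unfolding H1_theta_def om_def by blast
  moreover have "AE x in lebesgue. x \<in> Q1 \<alpha> \<beta> \<longrightarrow> of_real (p x) * g x = 0"
    using assms(2) by eventually_elim auto
  ultimately show ?thesis unfolding Vspace_def using assms(1) by blast
qed

lemma V_sum:
  fixes k :: nat
  assumes us: "\<forall>j<k. us j \<in> Vspace p \<alpha> \<beta> \<theta>" and p: "\<forall>x. p x > 0"
  shows "(\<lambda>x. \<Sum>j<k. c j * us j x) \<in> Vspace p \<alpha> \<beta> \<theta>"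
proof -
  define P where "P j g \<longleftrightarrow> is_H1_deriv (us j) g \<and> (AE x in lebesgue. (x::real) \<in> Q1 \<alpha> \<beta> \<longrightarrow> g x = 0)
        \<and> (\<forall>x. x \<notin> {0..1} \<longrightarrow> us j x = 0) \<and> us j 1 = om \<theta> * us j 0" for j g
  have "\<forall>j\<in>{..<k}. \<exists>g. P j g"
  proof
    fix j assume "j \<in> {..<k}"
    then have "us j \<in> Vspace p \<alpha> \<beta> \<theta>" using us by blast
    then obtain g where "is_H1_deriv (us j) g" "AE x in lebesgue. (x::real) \<in> Q1 \<alpha> \<beta> \<longrightarrow> g x = 0"
        "\<forall>x. x \<notin> {0..1} \<longrightarrow> us j x = 0" "us j 1 = om \<theta> * us j 0"
      using V_elim[OF _ p] by blast
    then have "P j g" unfolding P_def by blast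
    then show "\<exists>g. P j g" by blast
  qed
  then obtain gs where gs: "\<forall>j\<in>{..<k}. P j (gs j)"
    using bchoice by blast
  have g1: "\<And>j. j < k \<Longrightarrow> is_H1_deriv (us j) (gs j)"
    and g2: "\<And>j. j < k \<Longrightarrow> AE x in lebesgue. (x::real) \<in> Q1 \<alpha> \<beta> \<longrightarrow> gs j x = 0"
    and g3: "\<And>j x. j < k \<Longrightarrow> x \<notin> {0..1} \<Longrightarrow> us j x = 0"
    and g4: "\<And>j. j < k \<Longrightarrow> us j 1 = om \<theta> * us j 0"
    using gs unfolding P_def by auto
  show ?thesis
  proof (rule V_intro)
    show "is_H1_deriv (\<lambda>x. \<Sum>j<k. c j * us j x) (\<lambda>x. \<Sum>j<k. c j * gs j x)"
      by (rule H1_sum) (use g1 in blast)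
    have "AE x in lebesgue. \<forall>j\<in>{..<k}. (x::real) \<in> Q1 \<alpha> \<beta> \<longrightarrow> gs j x = 0"
      by (rule eventually_ball_finite) (use g2 in blast)+
    then show "AE x in lebesgue. (x::real) \<in> Q1 \<alpha> \<beta> \<longrightarrow> (\<Sum>j<k. c j * gs j x) = 0"
      by eventually_elim simp
    show "\<forall>x. x \<notin> {0..1} \<longrightarrow> (\<Sum>j<k. c j * us j x) = 0"
    proof (intro allI impI)
      fix x :: real assume "x \<notin> {0..1}"
      then show "(\<Sum>j<k. c j * us j x) = 0"
        by (intro sum.neutral) (simp add: g3)
    qed
    have "(\<Sum>j<k. c j * us j 1) = (\<Sum>j<k. om \<theta> * (c j * us j 0))"
      by (rule sum.cong) (simp_all add: g4)
    then show "(\<Sum>j<k. c j * us j 1) = om \<theta> * (\<Sum>j<k. c j * us j 0)"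
      by (simp add: sum_distrib_left)
  qed
qed

lemma const_right:
  assumes g: "is_H1_deriv u g" and ae: "AE x in lebesgue. x \<in> Q1 \<alpha> \<beta> \<longrightarrow> g x = 0"
    and x: "\<beta> \<le> x" "x \<le> 1" and b: "0 \<le> \<beta>"
  shows "u x = u 1"
proof -
  have gi: "set_integrable lebesgue {0..1} g" using g by (rule H1_int)
  have x01: "x \<in> {0..1}" using x b by auto
  have "set_lebesgue_integral lebesgue {x<..1} g = 0"
    unfolding set_lebesgue_integral_def
  proof (rule integral_eq_zero_AE)
    show "AE y in lebesgue. indicat_real {x<..1} y *\<^sub>R g y = 0"
      using ae AE_ne[of 1]
    proof eventually_elim
      case (elim y)
      show ?case
      proof (cases "y \<in> {x<..1}")
        case True
        then have "y \<in> Q1 \<alpha> \<beta>" using elim x unfolding Q1_def by auto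
        then show ?thesis using elim by simp
      qed simp
    qed
  qed
  then show ?thesis
  proof -
    have "0 \<le> x" "x \<le> 1" using x01 by auto
    note sp = set_integral_split01[OF gi this]
    have "u 1 = u 0 + set_lebesgue_integral lebesgue {0..1} g" using H1_eq[OF g, of 1] by simp
    moreover have "u x = u 0 + set_lebesgue_integral lebesgue {0..x} g" using H1_eq[OF g x01] .
    ultimately show ?thesis using sp \<open>set_lebesgue_integral lebesgue {x<..1} g = 0\<close> by simp
  qed
qed

lemma b_bound:
  assumes g: "is_H1_deriv u g" and ae: "AE x in lebesgue. x \<in> Q1 \<alpha> \<beta> \<longrightarrow> g x = 0"
    and b: "0 \<le> \<beta>" "\<beta> < 1"
  shows "(1 - \<beta>) * (cmod (u 1))^2 \<le> L2_norm_sq u"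
proof -
  have "(1 - \<beta>) * (cmod (u 1))^2 = set_lebesgue_integral lebesgue {\<beta><..<1} (\<lambda>x. (cmod (u 1))^2)"
  proof -
    have "set_lebesgue_integral lebesgue {\<beta><..<1} (\<lambda>x. (cmod (u 1))^2) = measure lebesgue {\<beta><..<1} *\<^sub>R (cmod (u 1))^2"
      by (rule set_integral_const) (use b in simp_all)
    moreover have "measure lebesgue {\<beta><..<1} = 1 - \<beta>" using b by simp
    ultimately show ?thesis by simp
  qed
  also have "\<dots> = set_lebesgue_integral lebesgue {\<beta><..<1} (\<lambda>x. (cmod (u x))^2)"
  proof (rule set_lebesgue_integral_cong)
    show "\<forall>x. x \<in> {\<beta><..<1} \<longrightarrow> (cmod (u 1))^2 = (cmod (u x))^2"
    proof (intro allI impI)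
      fix x assume x: "x \<in> {\<beta><..<1}"
      have "u x = u 1" by (rule const_right[OF g ae _ _ b(1)]) (use x in auto)
      then show "(cmod (u 1))^2 = (cmod (u x))^2" by simp
    qed
  qed simp
  also have "\<dots> \<le> L2_norm_sq u"
    unfolding L2_norm_sq_def set_lebesgue_integral_def
  proof (rule integral_mono)
    have i: "set_integrable lebesgue {0<..<1} (\<lambda>x. (cmod (u x))^2)" by (rule H1_L2_int[OF g])
    then show "integrable lebesgue (\<lambda>x. indicat_real {0<..<1} x *\<^sub>R (cmod (u x))\<^sup>2)"
      unfolding set_integrable_def .
    have "set_integrable lebesgue {\<beta><..<1} (\<lambda>x. (cmod (u x))^2)"
      by (rule set_integrable_subset[OF i]) (use b in auto)
    then show "integrable lebesgue (\<lambda>x. indicat_real {\<beta><..<1} x *\<^sub>R (cmod (u x))\<^sup>2)"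
      unfolding set_integrable_def .
    fix x show "indicat_real {\<beta><..<1} x *\<^sub>R (cmod (u x))\<^sup>2 \<le> indicat_real {0<..<1} x *\<^sub>R (cmod (u x))\<^sup>2"
      using b by (auto simp: indicator_def)
  qed
  finally show ?thesis .
qed

definition rr :: "real \<Rightarrow> real \<Rightarrow> real \<Rightarrow> real" where
  "rr \<alpha> \<beta> y = indicator {\<alpha><..<\<beta>} y / (\<beta> - \<alpha>)"

definition phiR :: "real \<Rightarrow> real \<Rightarrow> real \<Rightarrow> real" where
  "phiR \<alpha> \<beta> x = set_lebesgue_integral lebesgue {0..x} (rr \<alpha> \<beta>)"

definition phi :: "real \<Rightarrow> real \<Rightarrow> real \<Rightarrow> complex" where
  "phi \<alpha> \<beta> x = (if x \<in> {0..1} then complex_of_real (phiR \<alpha> \<beta> x) else 0)"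

definition dphi :: "real \<Rightarrow> real \<Rightarrow> real \<Rightarrow> complex" where
  "dphi \<alpha> \<beta> y = complex_of_real (rr \<alpha> \<beta> y)"

lemma sbm:
  fixes f :: "real \<Rightarrow> 'b::{banach, second_countable_topology}" and A :: "real set"
  assumes [measurable]: "f \<in> borel_measurable lebesgue" "A \<in> sets lebesgue"
  shows "set_borel_measurable lebesgue A f"
  unfolding set_borel_measurable_def
  by (rule borel_measurable_scaleR[OF borel_measurable_indicator[OF assms(2)] assms(1)])

lemma rr_meas: "rr \<alpha> \<beta> \<in> borel_measurable lebesgue"
  unfolding rr_def by (intro borel_measurable_divide borel_measurable_indicator borel_measurable_const) simp

lemma rr_nonneg: "\<alpha> < \<beta> \<Longrightarrow> rr \<alpha> \<beta> y \<ge> 0"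
  unfolding rr_def by (simp add: indicator_def)

lemma rr_le: "\<alpha> < \<beta> \<Longrightarrow> rr \<alpha> \<beta> y \<le> 1 / (\<beta> - \<alpha>)"
  unfolding rr_def by (simp add: indicator_def divide_right_mono)

lemma const_int01: "set_integrable lebesgue {0..1::real} (\<lambda>_. c :: 'b::euclidean_space)"
  by (rule absolutely_integrable_on_const) simp

lemma rr_int:
  assumes "\<alpha> < \<beta>"
  shows "set_integrable lebesgue {0..1} (rr \<alpha> \<beta>)"
proof (rule set_integrable_bound[OF const_int01[of "1 / (\<beta> - \<alpha>)"]])
  show "set_borel_measurable lebesgue {0..1} (rr \<alpha> \<beta>)"
    by (rule sbm[OF rr_meas]) simp
  show "AE x in lebesgue. x \<in> {0..1} \<longrightarrow> norm (rr \<alpha> \<beta> x) \<le> norm (1 / (\<beta> - \<alpha>))"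
    using rr_nonneg[OF assms] rr_le[OF assms] assms by (intro AE_I2) auto
qed

lemma set_int_point: "set_lebesgue_integral lebesgue {c::real} f = 0"
  unfolding set_lebesgue_integral_def
proof (rule integral_eq_zero_AE)
  show "AE x in lebesgue. indicat_real {c} x *\<^sub>R f x = 0"
    using AE_ne[of c] by eventually_elim simp
qed

lemma split01_real:
  fixes f :: "real \<Rightarrow> real"
  assumes f: "set_integrable lebesgue {0..1} f" and x: "0 \<le> x" "x \<le> 1"
  shows "set_lebesgue_integral lebesgue {0..1} f
       = set_lebesgue_integral lebesgue {0..x} f + set_lebesgue_integral lebesgue {x<..1} f"
proof -
  have e: "{0..1} = {0..x} \<union> {x<..1::real}" using x by auto
  have "set_lebesgue_integral lebesgue ({0..x} \<union> {x<..1}) f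
       = set_lebesgue_integral lebesgue {0..x} f + set_lebesgue_integral lebesgue {x<..1} f"
    using x by (intro set_integral_Un) (auto intro!: set_integrable_subset[OF f])
  then show ?thesis using e by simp
qed

lemma phiR_0: "phiR \<alpha> \<beta> 0 = 0"
  unfolding phiR_def using set_int_point[of 0] by simp

lemma phiR_1:
  assumes "0 \<le> \<alpha>" "\<alpha> < \<beta>" "\<beta> \<le> 1"
  shows "phiR \<alpha> \<beta> 1 = 1"
proof -
  have "phiR \<alpha> \<beta> 1 = set_lebesgue_integral lebesgue {\<alpha><..<\<beta>} (\<lambda>_. 1 / (\<beta> - \<alpha>))"
    unfolding phiR_def set_lebesgue_integral_def
    by (rule Bochner_Integration.integral_cong) (use assms in \<open>auto simp: rr_def indicator_def\<close>)
  also have "\<dots> = measure lebesgue {\<alpha><..<\<beta>} *\<^sub>R (1 / (\<beta> - \<alpha>))"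
    by (rule set_integral_const) (use assms in simp_all)
  also have "\<dots> = 1" using assms by simp
  finally show ?thesis .
qed

lemma phiR_bounds:
  assumes "0 \<le> \<alpha>" "\<alpha> < \<beta>" "\<beta> \<le> 1" and x: "0 \<le> x" "x \<le> 1"
  shows "0 \<le> phiR \<alpha> \<beta> x" "phiR \<alpha> \<beta> x \<le> 1"
proof -
  have nn: "0 \<le> set_lebesgue_integral lebesgue A (rr \<alpha> \<beta>)" for A
    unfolding set_lebesgue_integral_def
    by (intro Bochner_Integration.integral_nonneg) (use rr_nonneg[OF assms(2)] in \<open>simp add: indicator_def\<close>)
  then show "0 \<le> phiR \<alpha> \<beta> x" unfolding phiR_def by simp
  have "phiR \<alpha> \<beta> 1 = phiR \<alpha> \<beta> x + set_lebesgue_integral lebesgue {x<..1} (rr \<alpha> \<beta>)"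
    unfolding phiR_def by (rule split01_real[OF rr_int[OF assms(2)] x])
  then show "phiR \<alpha> \<beta> x \<le> 1" using phiR_1[OF assms(1-3)] nn[of "{x<..1}"] by simp
qed

lemma phi_norm_le:
  assumes "0 \<le> \<alpha>" "\<alpha> < \<beta>" "\<beta> \<le> 1"
  shows "cmod (phi \<alpha> \<beta> x) \<le> 1"
  using phiR_bounds[OF assms, of x] unfolding phi_def by auto

lemma phi_0: "phi \<alpha> \<beta> 0 = 0" unfolding phi_def using phiR_0 by simp

lemma phi_1: "0 \<le> \<alpha> \<Longrightarrow> \<alpha> < \<beta> \<Longrightarrow> \<beta> \<le> 1 \<Longrightarrow> phi \<alpha> \<beta> 1 = 1"
  unfolding phi_def using phiR_1 by simp

lemma dphi_Q1: "y \<in> Q1 \<alpha> \<beta> \<Longrightarrow> dphi \<alpha> \<beta> y = 0"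
  unfolding dphi_def rr_def Q1_def by (auto simp: indicator_def)

lemma phi_H1:
  assumes "0 \<le> \<alpha>" "\<alpha> < \<beta>" "\<beta> \<le> 1"
  shows "is_H1_deriv (phi \<alpha> \<beta>) (dphi \<alpha> \<beta>)"
proof (rule H1_intro)
  show m: "dphi \<alpha> \<beta> \<in> borel_measurable lebesgue"
    unfolding dphi_def by (rule measurable_compose[OF rr_meas borel_measurable_of_real])
  show "set_integrable lebesgue {0..1} (dphi \<alpha> \<beta>)"
  proof (rule set_integrable_bound[OF const_int01[of "1 / (\<beta> - \<alpha>)"]])
    show "set_borel_measurable lebesgue {0..1} (dphi \<alpha> \<beta>)"
      by (rule sbm[OF m]) simp
    show "AE x in lebesgue. x \<in> {0..1} \<longrightarrow> norm (dphi \<alpha> \<beta> x) \<le> norm (1 / (\<beta> - \<alpha>))"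
      using rr_nonneg[OF assms(2)] rr_le[OF assms(2)] assms by (intro AE_I2) (auto simp: dphi_def)
  qed
  show "set_integrable lebesgue {0..1} (\<lambda>x. (cmod (dphi \<alpha> \<beta> x))^2)"
  proof (rule set_integrable_bound[OF const_int01[of "(1 / (\<beta> - \<alpha>))^2"]])
    show "set_borel_measurable lebesgue {0..1} (\<lambda>x. (cmod (dphi \<alpha> \<beta> x))^2)"
    proof (rule sbm)
      note m[measurable]
      show "(\<lambda>x. (cmod (dphi \<alpha> \<beta> x))^2) \<in> borel_measurable lebesgue" by measurable
    qed simp
    show "AE x in lebesgue. x \<in> {0..1} \<longrightarrow> norm ((cmod (dphi \<alpha> \<beta> x))^2) \<le> norm ((1 / (\<beta> - \<alpha>))^2)"
    proof (intro AE_I2 impI)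
      fix x :: real
      have "0 \<le> rr \<alpha> \<beta> x" "rr \<alpha> \<beta> x \<le> 1 / (\<beta> - \<alpha>)" using rr_nonneg[OF assms(2)] rr_le[OF assms(2)] by auto
      then have "(rr \<alpha> \<beta> x)^2 \<le> (1 / (\<beta> - \<alpha>))^2" by (intro power_mono) auto
      then show "norm ((cmod (dphi \<alpha> \<beta> x))^2) \<le> norm ((1 / (\<beta> - \<alpha>))^2)"
        using \<open>0 \<le> rr \<alpha> \<beta> x\<close> by (simp add: dphi_def)
    qed
  qed
  fix x :: real assume x: "x \<in> {0..1}"
  have "set_lebesgue_integral lebesgue {0..x} (dphi \<alpha> \<beta>) = complex_of_real (phiR \<alpha> \<beta> x)"
    unfolding dphi_def phiR_def by (rule set_integral_complex_of_real)
  then show "phi \<alpha> \<beta> x = phi \<alpha> \<beta> 0 + set_lebesgue_integral lebesgue {0..x} (dphi \<alpha> \<beta>)"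
    using x by (simp add: phi_def phiR_0)
qed

definition Tm :: "real \<Rightarrow> real \<Rightarrow> complex \<Rightarrow> (real \<Rightarrow> complex) \<Rightarrow> real \<Rightarrow> complex" where
  "Tm \<alpha> \<beta> w u x = u x + w * u 1 * phi \<alpha> \<beta> x"

lemma Tm_H1:
  assumes g: "is_H1_deriv u g" and ab: "0 \<le> \<alpha>" "\<alpha> < \<beta>" "\<beta> \<le> 1"
  shows "is_H1_deriv (Tm \<alpha> \<beta> w u) (\<lambda>x. g x + (w * u 1) * dphi \<alpha> \<beta> x)"
proof -
  have "is_H1_deriv (\<lambda>x. 1 * u x + (w * u 1) * phi \<alpha> \<beta> x) (\<lambda>x. 1 * g x + (w * u 1) * dphi \<alpha> \<beta> x)"
    by (rule H1_lin[OF g phi_H1[OF ab]])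
  then show ?thesis unfolding Tm_def by (simp add: mult.assoc)
qed

lemma Tm_V:
  assumes ab: "0 \<le> \<alpha>" "\<alpha> < \<beta>" "\<beta> \<le> 1" and p: "\<forall>x. p x > 0"
    and u: "u \<in> Vspace p \<alpha> \<beta> \<theta>"
  shows "Tm \<alpha> \<beta> (om \<delta> - 1) u \<in> Vspace p \<alpha> \<beta> (\<theta> + \<delta>)"
proof -
  obtain g where g: "is_H1_deriv u g" and ae: "AE x in lebesgue. x \<in> Q1 \<alpha> \<beta> \<longrightarrow> g x = 0"
    and z: "\<forall>x. x \<notin> {0..1} \<longrightarrow> u x = 0" and b: "u 1 = om \<theta> * u 0"
    using V_elim[OF u p] by blast
  show ?thesis
  proof (rule V_intro)
    show "is_H1_deriv (Tm \<alpha> \<beta> (om \<delta> - 1) u) (\<lambda>x. g x + ((om \<delta> - 1) * u 1) * dphi \<alpha> \<beta> x)"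
      by (rule Tm_H1[OF g ab])
    show "AE x in lebesgue. x \<in> Q1 \<alpha> \<beta> \<longrightarrow> g x + ((om \<delta> - 1) * u 1) * dphi \<alpha> \<beta> x = 0"
      using ae by eventually_elim (simp add: dphi_Q1)
    show "\<forall>x. x \<notin> {0..1} \<longrightarrow> Tm \<alpha> \<beta> (om \<delta> - 1) u x = 0"
      using z by (simp add: Tm_def phi_def)
    have "Tm \<alpha> \<beta> (om \<delta> - 1) u 1 = om \<delta> * u 1"
      by (simp add: Tm_def phi_1[OF ab] algebra_simps)
    also have "\<dots> = om (\<theta> + \<delta>) * u 0" using b by (simp add: om_add)
    also have "u 0 = Tm \<alpha> \<beta> (om \<delta> - 1) u 0" by (simp add: Tm_def phi_0)
    finally show "Tm \<alpha> \<beta> (om \<delta> - 1) u 1 = om (\<theta> + \<delta>) * Tm \<alpha> \<beta> (om \<delta> - 1) u 0" .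
  qed
qed

lemma Tm_sum:
  "Tm \<alpha> \<beta> w (\<lambda>x. \<Sum>j<k. c j * us j x) x = (\<Sum>j<k. c j * Tm \<alpha> \<beta> w (us j) x)"
  unfolding Tm_def by (simp add: sum.distrib sum_distrib_left sum_distrib_right algebra_simps)

lemma Tm_inj:
  assumes ab: "0 \<le> \<alpha>" "\<alpha> < \<beta>" "\<beta> \<le> 1"
    and z: "\<forall>x. Tm \<alpha> \<beta> (om \<delta> - 1) u x = 0"
  shows "u x = 0"
proof -
  have "Tm \<alpha> \<beta> (om \<delta> - 1) u 1 = om \<delta> * u 1"
    by (simp add: Tm_def phi_1[OF ab] algebra_simps)
  then have "u 1 = 0" using z om_nz[of \<delta>] by simp
  then have "Tm \<alpha> \<beta> (om \<delta> - 1) u x = u x" by (simp add: Tm_def)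
  then show ?thesis using z by simp
qed

lemma PW:
  fixes a b :: complex
  assumes "\<eta> \<ge> 0" "\<eta> = 0 \<longrightarrow> b = 0"
  shows "(cmod (a + b))^2 \<le> (1 + \<eta>) * (cmod a)^2 + (1 + 1 / \<eta>) * (cmod b)^2"
proof (cases "\<eta> = 0")
  case True then show ?thesis using assms by simp
next
  case False
  then have e: "\<eta> > 0" using assms by simp
  define A where "A = cmod a"
  define B where "B = cmod b"
  have AB: "A \<ge> 0" "B \<ge> 0" unfolding A_def B_def by auto
  have "cmod (a + b) \<le> A + B" unfolding A_def B_def by (rule norm_triangle_ineq)
  then have "(cmod (a + b))^2 \<le> (A + B)^2" by (intro power_mono) auto
  also have "\<dots> \<le> (1 + \<eta>) * A^2 + (1 + 1 / \<eta>) * B^2"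
  proof -
    have "0 \<le> (\<eta> * A - B)^2 / \<eta>" using e by simp
    also have "(\<eta> * A - B)^2 / \<eta> = \<eta> * A^2 - 2 * A * B + B^2 / \<eta>"
      using e by (simp add: power2_eq_square field_simps)
    finally have "2 * A * B \<le> \<eta> * A^2 + B^2 / \<eta>" by simp
    then show ?thesis by (simp add: power2_eq_square algebra_simps)
  qed
  finally show ?thesis unfolding A_def B_def .
qed

lemma PI:
  fixes h :: "real \<Rightarrow> complex"
  assumes pm: "p \<in> borel_measurable lebesgue" and pM: "AE x in lebesgue. x \<in> {0<..<1} \<longrightarrow> p x \<le> M"
    and hm: "h \<in> borel_measurable lebesgue" and hs: "set_integrable lebesgue {0..1} (\<lambda>x. (cmod (h x))^2)"
    and ab: "0 \<le> \<alpha>" "\<beta> \<le> 1" and pp: "\<forall>x. p x > 0"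
  shows "set_integrable lebesgue {\<alpha><..<\<beta>} (\<lambda>x. p x * (cmod (h x))^2)"
proof (rule set_integrable_bound)
  have "set_integrable lebesgue {\<alpha><..<\<beta>} (\<lambda>x. (cmod (h x))^2)"
    by (rule set_integrable_subset[OF hs]) (use ab in auto)
  then show "set_integrable lebesgue {\<alpha><..<\<beta>} (\<lambda>x. M * (cmod (h x))^2)"
    by (rule set_integrable_mult_right)
  show "set_borel_measurable lebesgue {\<alpha><..<\<beta>} (\<lambda>x. p x * (cmod (h x))^2)"
  proof (rule sbm)
    note pm[measurable] hm[measurable]
    show "(\<lambda>x. p x * (cmod (h x))^2) \<in> borel_measurable lebesgue" by measurable
  qed simp
  show "AE x in lebesgue. x \<in> {\<alpha><..<\<beta>} \<longrightarrow> norm (p x * (cmod (h x))^2) \<le> norm (M * (cmod (h x))^2)"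
    using pM
  proof eventually_elim
    case (elim x)
    show ?case
    proof
      assume x: "x \<in> {\<alpha><..<\<beta>}"
      then have "p x \<le> M" using elim ab by auto
      moreover have "p x > 0" using pp by blast
      ultimately show "norm (p x * (cmod (h x))^2) \<le> norm (M * (cmod (h x))^2)"
        by (simp add: abs_mult mult_right_mono)
    qed
  qed
qed

lemma P_int:
  fixes p :: "real \<Rightarrow> real"
  assumes pm: "p \<in> borel_measurable lebesgue" and pM: "AE x in lebesgue. x \<in> {0<..<1} \<longrightarrow> p x \<le> M"
    and ab: "0 \<le> \<alpha>" "\<alpha> \<le> \<beta>" "\<beta> \<le> 1" and pp: "\<forall>x. p x > 0"
  shows "set_integrable lebesgue {\<alpha><..<\<beta>} p"
    and "set_lebesgue_integral lebesgue {\<alpha><..<\<beta>} p \<le> M * (\<beta> - \<alpha>)"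
proof -
  have c: "set_integrable lebesgue {\<alpha><..<\<beta>} (\<lambda>_. M)"
    by (rule absolutely_integrable_on_const) simp
  have ae: "AE x in lebesgue. x \<in> {\<alpha><..<\<beta>} \<longrightarrow> p x \<le> M"
    using pM by eventually_elim (use ab in auto)
  show i: "set_integrable lebesgue {\<alpha><..<\<beta>} p"
  proof (rule set_integrable_bound[OF c])
    show "set_borel_measurable lebesgue {\<alpha><..<\<beta>} p" by (rule sbm[OF pm]) simp
    show "AE x in lebesgue. x \<in> {\<alpha><..<\<beta>} \<longrightarrow> norm (p x) \<le> norm M"
      using ae
    proof eventually_elim
      case (elim x)
      have "p x > 0" using pp by blast
      then show ?case using elim by auto
    qed
  qed
  have "set_lebesgue_integral lebesgue {\<alpha><..<\<beta>} p \<le> set_lebesgue_integral lebesgue {\<alpha><..<\<beta>} (\<lambda>_. M)"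
    by (rule set_integral_mono_AE[OF i c]) (use ae in simp)
  also have "\<dots> = measure lebesgue {\<alpha><..<\<beta>} *\<^sub>R M"
    by (rule set_integral_const) (use ab in simp_all)
  also have "\<dots> = M * (\<beta> - \<alpha>)" using ab by simp
  finally show "set_lebesgue_integral lebesgue {\<alpha><..<\<beta>} p \<le> M * (\<beta> - \<alpha>)" .
qed

lemma aux_d: "(d::real) > 0 \<Longrightarrow> q / d^2 * (M * d) = q * (M / d)"
  by (simp add: power2_eq_square field_simps)

lemma aux_final:
  fixes L D \<eta> a b E t M :: real
  assumes "L > 0" "D > 0" "\<eta> \<ge> 0" "a > 0" "b > 0"
  shows "((1 + \<eta>) * E + t / a * L * (M / b)) / (L * D / (1 + \<eta>))
       = (1 + \<eta>)^2 / D * (E / L) + (1 + \<eta>) * t / a * (M / b) / D"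
  using assms by (simp add: field_simps power2_eq_square)

lemma est:
  fixes p :: "real \<Rightarrow> real" and w :: complex
  assumes ab: "0 < \<alpha>" "\<alpha> < \<beta>" "\<beta> < 1"
    and pm: "p \<in> borel_measurable lebesgue" and pp: "\<forall>x. p x > 0"
    and pM: "AE x in lebesgue. x \<in> {0<..<1} \<longrightarrow> p x \<le> M" and M0: "M \<ge> 0"
    and u: "u \<in> Vspace p \<alpha> \<beta> \<theta>" and Lp: "L2_norm_sq u > 0"
    and s: "s = (cmod w)^2" and e: "\<eta> = sqrt s" and t: "t = s + \<eta>" and D: "D = 1 - t / (1 - \<beta>)"
    and Dp: "D > 0"
  shows "rayleigh p \<alpha> \<beta> (Tm \<alpha> \<beta> w u)
     \<le> (1 + \<eta>)^2 / D * rayleigh p \<alpha> \<beta> u + (1 + \<eta>) * t / (1 - \<beta>) * (M / (\<beta> - \<alpha>)) / D"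
proof -
  obtain g where g: "is_H1_deriv u g" and ae: "AE x in lebesgue. x \<in> Q1 \<alpha> \<beta> \<longrightarrow> g x = 0"
    using V_elim[OF u pp] by blast
  have ab0: "0 \<le> \<alpha>" "\<alpha> < \<beta>" "\<beta> \<le> 1" using ab by auto
  define c where "c = w * u 1"
  define G where "G x = g x + c * dphi \<alpha> \<beta> x" for x
  have TG: "is_H1_deriv (Tm \<alpha> \<beta> w u) G"
    unfolding G_def c_def by (rule Tm_H1[OF g ab0])
  define L where "L = L2_norm_sq u"
  have u1b: "(cmod (u 1))^2 \<le> L / (1 - \<beta>)"
    using b_bound[OF g ae _ ab(3)] ab unfolding L_def by (simp add: field_simps)
  have s0: "s \<ge> 0" using s by simp
  have e0: "\<eta> \<ge> 0" using e s0 by simp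
  have t0: "t \<ge> 0" using t s0 e0 by simp
  have cond: "\<eta> = 0 \<longrightarrow> c = 0"
  proof
    assume "\<eta> = 0"
    then have "s = 0" using e s0 by simp
    then have "w = 0" using s by simp
    then show "c = 0" unfolding c_def by simp
  qed
  define q where "q = (1 + 1 / \<eta>) * (cmod c)^2"
  have q0: "q \<ge> 0" unfolding q_def using e0 by simp
  have qt: "q = t * (cmod (u 1))^2"
  proof (cases "s = 0")
    case True
    then show ?thesis using s t e unfolding q_def c_def by (simp add: norm_mult)
  next
    case False
    then have "\<eta> > 0" using e s0 by simp
    have "s = \<eta>^2" using e s0 by simp
    then have "(1 + 1 / \<eta>) * s = t" using t \<open>\<eta> > 0\<close> by (simp add: power2_eq_square field_simps)
    then show ?thesis unfolding q_def c_def using s by (simp add: norm_mult power_mult_distrib mult.assoc[symmetric])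
  qed
  have qb: "q \<le> t / (1 - \<beta>) * L"
  proof -
    have "q \<le> t * (L / (1 - \<beta>))" unfolding qt by (rule mult_left_mono[OF u1b t0])
    then show ?thesis by simp
  qed
  have iu: "set_integrable lebesgue {0<..<1} (\<lambda>x. (cmod (u x))^2)" by (rule H1_L2_int[OF g])
  have iT: "set_integrable lebesgue {0<..<1} (\<lambda>x. (cmod (Tm \<alpha> \<beta> w u x))^2)" by (rule H1_L2_int[OF TG])
  have iq: "set_integrable lebesgue {0<..<1::real} (\<lambda>_. q)"
    by (rule absolutely_integrable_on_const) simp
  have "L \<le> set_lebesgue_integral lebesgue {0<..<1} (\<lambda>x. (1 + \<eta>) * (cmod (Tm \<alpha> \<beta> w u x))^2 + q)"
    unfolding L_def L2_norm_sq_def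
  proof (rule set_integral_mono[OF iu])
    show "set_integrable lebesgue {0<..<1} (\<lambda>x. (1 + \<eta>) * (cmod (Tm \<alpha> \<beta> w u x))^2 + q)"
      using iT iq by (intro set_integral_add(1) set_integrable_mult_right)
    fix x :: real
    have ux: "u x = Tm \<alpha> \<beta> w u x + (- (c * phi \<alpha> \<beta> x))" unfolding Tm_def c_def by simp
    have "(cmod (u x))^2 \<le> (1 + \<eta>) * (cmod (Tm \<alpha> \<beta> w u x))^2 + (1 + 1 / \<eta>) * (cmod (- (c * phi \<alpha> \<beta> x)))^2"
      unfolding ux by (rule PW[OF e0]) (use cond in simp)
    also have "(cmod (- (c * phi \<alpha> \<beta> x)))^2 \<le> (cmod c)^2"
    proof -
      have "cmod (phi \<alpha> \<beta> x) \<le> 1" by (rule phi_norm_le[OF ab0])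
      then have "cmod c * cmod (phi \<alpha> \<beta> x) \<le> cmod c" by (simp add: mult_left_le)
      then have "(cmod c * cmod (phi \<alpha> \<beta> x))^2 \<le> (cmod c)^2" by (intro power_mono) auto
      then show ?thesis by (simp add: norm_mult)
    qed
    then have "(1 + 1 / \<eta>) * (cmod (- (c * phi \<alpha> \<beta> x)))^2 \<le> q"
      unfolding q_def using e0 by (intro mult_left_mono) auto
    finally show "(cmod (u x))^2 \<le> (1 + \<eta>) * (cmod (Tm \<alpha> \<beta> w u x))^2 + q" by simp
  qed
  also have "\<dots> = (1 + \<eta>) * L2_norm_sq (Tm \<alpha> \<beta> w u) + q"
  proof -
    have "set_lebesgue_integral lebesgue {0<..<1::real} (\<lambda>_. q) = measure lebesgue {0<..<1::real} *\<^sub>R q"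
      by (rule set_integral_const) simp_all
    then show ?thesis unfolding L2_norm_sq_def
      using iT iq by (simp add: set_integral_add(2) set_integrable_mult_right)
  qed
  finally have L2T: "L \<le> (1 + \<eta>) * L2_norm_sq (Tm \<alpha> \<beta> w u) + q" .
  have Lpos: "L > 0" using Lp unfolding L_def .
  define Y where "Y = L * D / (1 + \<eta>)"
  have Yp: "Y > 0" unfolding Y_def using Lpos Dp e0 by simp
  have YT: "Y \<le> L2_norm_sq (Tm \<alpha> \<beta> w u)"
  proof -
    have "L * D \<le> L - q" using qb unfolding D by (simp add: algebra_simps)
    also have "\<dots> \<le> (1 + \<eta>) * L2_norm_sq (Tm \<alpha> \<beta> w u)" using L2T by simp
    finally show ?thesis unfolding Y_def using e0 by (simp add: divide_le_eq mult.commute)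
  qed
  have gm: "g \<in> borel_measurable lebesgue" by (rule H1_meas[OF g])
  have Gm: "G \<in> borel_measurable lebesgue" by (rule H1_meas[OF TG])
  have ig: "set_integrable lebesgue {\<alpha><..<\<beta>} (\<lambda>x. p x * (cmod (g x))^2)"
    by (rule PI[OF pm pM gm H1_sq[OF g]]) (use ab pp in auto)
  have iG: "set_integrable lebesgue {\<alpha><..<\<beta>} (\<lambda>x. p x * (cmod (G x))^2)"
    by (rule PI[OF pm pM Gm H1_sq[OF TG]]) (use ab pp in auto)
  have ip: "set_integrable lebesgue {\<alpha><..<\<beta>} p" and pint: "set_lebesgue_integral lebesgue {\<alpha><..<\<beta>} p \<le> M * (\<beta> - \<alpha>)"
    using P_int[OF pm pM _ _ _ pp, of \<alpha> \<beta>] ab by auto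
  have Eu: "energy p \<alpha> \<beta> u = set_lebesgue_integral lebesgue {\<alpha><..<\<beta>} (\<lambda>x. p x * (cmod (g x))^2)"
    by (rule energy_eq[OF g _ _ pm]) (use ab in auto)
  have ET: "energy p \<alpha> \<beta> (Tm \<alpha> \<beta> w u) = set_lebesgue_integral lebesgue {\<alpha><..<\<beta>} (\<lambda>x. p x * (cmod (G x))^2)"
    by (rule energy_eq[OF TG _ _ pm]) (use ab in auto)
  define r where "r = q / (\<beta> - \<alpha>)^2"
  have r0: "r \<ge> 0" unfolding r_def using q0 by simp
  have "energy p \<alpha> \<beta> (Tm \<alpha> \<beta> w u) \<le> set_lebesgue_integral lebesgue {\<alpha><..<\<beta>} (\<lambda>x. (1 + \<eta>) * (p x * (cmod (g x))^2) + r * p x)"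
    unfolding ET
  proof (rule set_integral_mono[OF iG])
    show "set_integrable lebesgue {\<alpha><..<\<beta>} (\<lambda>x. (1 + \<eta>) * (p x * (cmod (g x))^2) + r * p x)"
      using ig ip by (intro set_integral_add(1) set_integrable_mult_right)
    fix x assume x: "x \<in> {\<alpha><..<\<beta>}"
    have dx: "dphi \<alpha> \<beta> x = 1 / (\<beta> - \<alpha>)" using x unfolding dphi_def rr_def by simp
    have "(cmod (G x))^2 \<le> (1 + \<eta>) * (cmod (g x))^2 + (1 + 1 / \<eta>) * (cmod (c * dphi \<alpha> \<beta> x))^2"
      unfolding G_def by (rule PW[OF e0]) (use cond in simp)
    also have "(1 + 1 / \<eta>) * (cmod (c * dphi \<alpha> \<beta> x))^2 = r"
    proof -
      have nb: "cmod (complex_of_real \<beta> - complex_of_real \<alpha>) = \<beta> - \<alpha>"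
        using ab by (metis abs_of_pos diff_gt_0_iff_gt norm_of_real of_real_diff)
      show ?thesis
        unfolding r_def q_def dx using ab nb by (simp add: norm_mult power_divide norm_divide)
    qed
    finally have "(cmod (G x))^2 \<le> (1 + \<eta>) * (cmod (g x))^2 + r" .
    moreover have "p x > 0" using pp by blast
    ultimately have "p x * (cmod (G x))^2 \<le> p x * ((1 + \<eta>) * (cmod (g x))^2 + r)"
      by (intro mult_left_mono) auto
    then show "p x * (cmod (G x))^2 \<le> (1 + \<eta>) * (p x * (cmod (g x))^2) + r * p x"
      by (simp add: algebra_simps)
  qed
  also have "\<dots> = (1 + \<eta>) * energy p \<alpha> \<beta> u + r * set_lebesgue_integral lebesgue {\<alpha><..<\<beta>} p"
    unfolding Eu using ig ip by (simp add: set_integral_add(2) set_integrable_mult_right)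
  also have "\<dots> \<le> (1 + \<eta>) * energy p \<alpha> \<beta> u + r * (M * (\<beta> - \<alpha>))"
    using mult_left_mono[OF pint r0] by simp
  also have "r * (M * (\<beta> - \<alpha>)) = q * (M / (\<beta> - \<alpha>))"
    unfolding r_def using ab by (intro aux_d) simp
  also have "(1 + \<eta>) * energy p \<alpha> \<beta> u + q * (M / (\<beta> - \<alpha>)) \<le> (1 + \<eta>) * energy p \<alpha> \<beta> u + t / (1 - \<beta>) * L * (M / (\<beta> - \<alpha>))"
  proof -
    have "M / (\<beta> - \<alpha>) \<ge> 0" using M0 ab by simp
    from mult_right_mono[OF qb this] show ?thesis by simp
  qed
  finally have ETb: "energy p \<alpha> \<beta> (Tm \<alpha> \<beta> w u) \<le> (1 + \<eta>) * energy p \<alpha> \<beta> u + t / (1 - \<beta>) * L * (M / (\<beta> - \<alpha>))" .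
  have EN: "energy p \<alpha> \<beta> (Tm \<alpha> \<beta> w u) \<ge> 0" by (rule energy_nonneg[OF pp])
  have "rayleigh p \<alpha> \<beta> (Tm \<alpha> \<beta> w u) \<le> ((1 + \<eta>) * energy p \<alpha> \<beta> u + t / (1 - \<beta>) * L * (M / (\<beta> - \<alpha>))) / Y"
    unfolding rayleigh_def
    by (rule frac_le[OF _ ETb Yp YT]) (use EN ETb in linarith)
  also have "\<dots> = (1 + \<eta>)^2 / D * rayleigh p \<alpha> \<beta> u + (1 + \<eta>) * t / (1 - \<beta>) * (M / (\<beta> - \<alpha>)) / D"
    unfolding Y_def rayleigh_def L_def[symmetric] using Lpos Dp e0 ab
    by (intro aux_final) auto
  finally show ?thesis .
qed

lemma CS:
  fixes z :: "nat \<Rightarrow> complex"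
  shows "(cmod (\<Sum>j<k. z j))^2 \<le> real k * (\<Sum>j<k. (cmod (z j))^2)"
proof -
  have "cmod (\<Sum>j<k. z j) \<le> (\<Sum>j<k. cmod (z j))" by (rule norm_sum)
  then have "(cmod (\<Sum>j<k. z j))^2 \<le> (\<Sum>j<k. cmod (z j))^2" by (intro power_mono) auto
  also have "\<dots> \<le> (\<Sum>j<k. (cmod (z j))^2) * card {..<k}" by (rule sum_squared_le_sum_of_squares)
  finally show ?thesis by (simp add: mult.commute)
qed

lemma subseq_conv:
  fixes f :: "nat \<Rightarrow> nat \<Rightarrow> complex"
  assumes b: "\<And>n j. j < k \<Longrightarrow> cmod (f n j) \<le> 1"
  shows "\<exists>r L. strict_mono r \<and> (\<forall>j<k. (\<lambda>n. f (r n) j) \<longlonglongrightarrow> L j)"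
  using b
proof (induction k)
  case 0
  then show ?case by (intro exI[of _ id] exI[of _ "\<lambda>_. 0"]) (auto simp: strict_mono_def)
next
  case (Suc k)
  then obtain r L where r: "strict_mono r" and L: "\<forall>j<k. (\<lambda>n. f (r n) j) \<longlonglongrightarrow> L j"
    by (meson less_SucI)
  have sc: "seq_compact (cball (0::complex) 1)"
    by (rule compact_imp_seq_compact) simp
  have "\<forall>n. (\<lambda>n. f (r n) k) n \<in> cball 0 1" using Suc.prems by auto
  then obtain l r' where r': "strict_mono r'" and l: "((\<lambda>n. f (r n) k) \<circ> r') \<longlonglongrightarrow> l"
    using seq_compactE[OF sc] by metis
  show ?case
  proof (intro exI conjI allI impI)
    show "strict_mono (r \<circ> r')" using r r' by (rule strict_mono_o)
    fix j assume j: "j < Suc k"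
    show "(\<lambda>n. f ((r \<circ> r') n) j) \<longlonglongrightarrow> (L(k := l)) j"
    proof (cases "j = k")
      case True then show ?thesis using l by (simp add: o_def)
    next
      case False
      then have "j < k" using j by simp
      then have "(\<lambda>n. f (r n) j) \<longlonglongrightarrow> L j" using L by blast
      from LIMSEQ_subseq_LIMSEQ[OF this r'] show ?thesis using False by (simp add: o_def)
    qed
  qed
qed

lemma set_integrable_sum':
  fixes f :: "nat \<Rightarrow> real \<Rightarrow> 'b::{banach, second_countable_topology}"
  shows "finite I \<Longrightarrow> (\<forall>i\<in>I. set_integrable M A (f i)) \<Longrightarrow> set_integrable M A (\<lambda>x. \<Sum>i\<in>I. f i x)"
proof (induction I rule: finite_induct)
  case empty then show ?case by (simp add: set_integrable_def)
next
  case (insert i I) then show ?case by (simp add: set_integral_add(1))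
qed

lemma set_integral_sum':
  fixes f :: "nat \<Rightarrow> real \<Rightarrow> 'b::{banach, second_countable_topology}"
  shows "finite I \<Longrightarrow> (\<forall>i\<in>I. set_integrable M A (f i)) \<Longrightarrow>
    set_lebesgue_integral M A (\<lambda>x. \<Sum>i\<in>I. f i x) = (\<Sum>i\<in>I. set_lebesgue_integral M A (f i))"
proof (induction I rule: finite_induct)
  case empty then show ?case by simp
next
  case (insert i I)
  have "set_integrable M A (\<lambda>x. \<Sum>i\<in>I. f i x)" using insert by (intro set_integrable_sum') auto
  then show ?case using insert by (simp add: set_integral_add(2))
qed

definition vc :: "nat \<Rightarrow> (nat \<Rightarrow> real \<Rightarrow> complex) \<Rightarrow> (nat \<Rightarrow> complex) \<Rightarrow> real \<Rightarrow> complex" where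
  "vc k us c = (\<lambda>x. \<Sum>j<k. c j * us j x)"

definition Ssq :: "nat \<Rightarrow> (nat \<Rightarrow> complex) \<Rightarrow> real" where
  "Ssq k c = (\<Sum>j<k. (cmod (c j))^2)"

lemma Ssq_nonneg: "Ssq k c \<ge> 0" unfolding Ssq_def by (intro sum_nonneg) auto

lemma Ssq_pos: "(\<exists>j<k. c j \<noteq> 0) \<Longrightarrow> Ssq k c > 0"
  unfolding Ssq_def
proof -
  assume "\<exists>j<k. c j \<noteq> 0"
  then obtain j where j: "j < k" "c j \<noteq> 0" by blast
  have "(cmod (c j))^2 \<le> (\<Sum>j<k. (cmod (c j))^2)"
    by (rule member_le_sum) (use j in auto)
  moreover have "(cmod (c j))^2 > 0" using j by simp
  ultimately show "(\<Sum>j<k. (cmod (c j))^2) > 0" by linarith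
qed

lemma Ssq_ge: "j < k \<Longrightarrow> (cmod (c j))^2 \<le> Ssq k c"
  unfolding Ssq_def by (rule member_le_sum) auto

lemma gs_choice:
  fixes k :: nat
  assumes us: "\<forall>j<k. us j \<in> Vspace p \<alpha> \<beta> \<theta>" and p: "\<forall>x. p x > 0"
  obtains gs where "\<And>j. j < k \<Longrightarrow> is_H1_deriv (us j) (gs j)"
    "\<And>j. j < k \<Longrightarrow> AE x in lebesgue. x \<in> Q1 \<alpha> \<beta> \<longrightarrow> gs j x = 0"
proof -
  define P where "P j g \<longleftrightarrow> is_H1_deriv (us j) g \<and> (AE x in lebesgue. (x::real) \<in> Q1 \<alpha> \<beta> \<longrightarrow> g x = 0)" for j g
  have "\<forall>j\<in>{..<k}. \<exists>g. P j g"
  proof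
    fix j assume "j \<in> {..<k}"
    then have "us j \<in> Vspace p \<alpha> \<beta> \<theta>" using us by blast
    then obtain g where "is_H1_deriv (us j) g" "AE x in lebesgue. (x::real) \<in> Q1 \<alpha> \<beta> \<longrightarrow> g x = 0"
      using V_elim[OF _ p] by blast
    then show "\<exists>g. P j g" unfolding P_def by blast
  qed
  then obtain gs where gs: "\<forall>j\<in>{..<k}. P j (gs j)"
    using bchoice by blast
  show ?thesis by (rule that) (use gs in \<open>auto simp: P_def\<close>)
qed

lemma vc_V:
  assumes "\<forall>j<k. us j \<in> Vspace p \<alpha> \<beta> \<theta>" "\<forall>x. p x > 0"
  shows "vc k us c \<in> Vspace p \<alpha> \<beta> \<theta>"
  unfolding vc_def by (rule V_sum[OF assms])

lemma V_H1:
  assumes "u \<in> Vspace p \<alpha> \<beta> \<theta>" "\<forall>x. p x > 0"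
  obtains g where "is_H1_deriv u g"
  using V_elim[OF assms] by metis

lemma V_zero_out:
  assumes "u \<in> Vspace p \<alpha> \<beta> \<theta>" "\<forall>x. p x > 0" "x \<notin> {0..1}"
  shows "u x = 0"
  using V_elim[OF assms(1,2)] assms(3) by metis

lemma L2pos_span:
  assumes us: "\<forall>j<k. us j \<in> Vspace p \<alpha> \<beta> \<theta>" and p: "\<forall>x. p x > 0"
    and ind: "\<forall>c. (\<forall>x. (\<Sum>j<k. c j * us j x) = 0) \<longrightarrow> (\<forall>j<k. c j = 0)"
    and c: "\<exists>j<k. c j \<noteq> 0"
  shows "L2_norm_sq (vc k us c) > 0"
proof -
  have V: "vc k us c \<in> Vspace p \<alpha> \<beta> \<theta>" by (rule vc_V[OF us p])
  obtain g where g: "is_H1_deriv (vc k us c) g" using V_H1[OF V p] .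
  have "\<not> (\<forall>x. (\<Sum>j<k. c j * us j x) = 0)" using ind c by blast
  then obtain x where x: "vc k us c x \<noteq> 0" unfolding vc_def by blast
  have "x \<in> {0..1}" using V_zero_out[OF V p] x by blast
  then show ?thesis by (rule L2_pos[OF g _ x])
qed

lemma L2_scale: "L2_norm_sq (\<lambda>x. a * f x) = (cmod a)^2 * L2_norm_sq f"
  unfolding L2_norm_sq_def by (simp add: norm_mult power_mult_distrib)

lemma vc_scale: "vc k us (\<lambda>j. a * c j) = (\<lambda>x. a * vc k us c x)"
  unfolding vc_def by (simp add: sum_distrib_left mult.assoc)

lemma L2_vc_bound:
  assumes us: "\<forall>j<k. us j \<in> Vspace p \<alpha> \<beta> \<theta>" and p: "\<forall>x. p x > 0"
  shows "L2_norm_sq (vc k us c) \<le> real k * (\<Sum>j<k. (cmod (c j))^2 * L2_norm_sq (us j))"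
proof -
  have V: "vc k us c \<in> Vspace p \<alpha> \<beta> \<theta>" by (rule vc_V[OF us p])
  obtain g where g: "is_H1_deriv (vc k us c) g" using V_H1[OF V p] .
  have iu: "\<And>j. j < k \<Longrightarrow> set_integrable lebesgue {0<..<1} (\<lambda>x. (cmod (us j x))^2)"
  proof -
    fix j assume "j < k"
    then obtain h where "is_H1_deriv (us j) h" using V_H1[OF _ p] us by metis
    then show "set_integrable lebesgue {0<..<1} (\<lambda>x. (cmod (us j x))^2)" by (rule H1_L2_int)
  qed
  have ij: "\<forall>j\<in>{..<k}. set_integrable lebesgue {0<..<1} (\<lambda>x. real k * ((cmod (c j))^2 * (cmod (us j x))^2))"
    using iu by (auto intro!: set_integrable_mult_right)
  have "L2_norm_sq (vc k us c) \<le> set_lebesgue_integral lebesgue {0<..<1} (\<lambda>x. \<Sum>j<k. real k * ((cmod (c j))^2 * (cmod (us j x))^2))"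
    unfolding L2_norm_sq_def
  proof (rule set_integral_mono[OF H1_L2_int[OF g]])
    show "set_integrable lebesgue {0<..<1} (\<lambda>x. \<Sum>j<k. real k * ((cmod (c j))^2 * (cmod (us j x))^2))"
      by (rule set_integrable_sum'[OF _ ij]) simp
    fix x :: real
    have "(cmod (vc k us c x))^2 \<le> real k * (\<Sum>j<k. (cmod (c j * us j x))^2)"
      unfolding vc_def by (rule CS)
    also have "\<dots> = (\<Sum>j<k. real k * ((cmod (c j))^2 * (cmod (us j x))^2))"
      by (simp add: sum_distrib_left norm_mult power_mult_distrib)
    finally show "(cmod (vc k us c x))^2 \<le> (\<Sum>j<k. real k * ((cmod (c j))^2 * (cmod (us j x))^2))" .
  qed
  also have "\<dots> = (\<Sum>j<k. set_lebesgue_integral lebesgue {0<..<1} (\<lambda>x. real k * ((cmod (c j))^2 * (cmod (us j x))^2)))"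
    by (rule set_integral_sum'[OF _ ij]) simp
  also have "\<dots> = real k * (\<Sum>j<k. (cmod (c j))^2 * L2_norm_sq (us j))"
    unfolding L2_norm_sq_def by (simp add: sum_distrib_left)
  finally show ?thesis .
qed

lemma L2_add_le:
  assumes f: "is_H1_deriv f g1" and h: "is_H1_deriv h g2"
  shows "L2_norm_sq (\<lambda>x. f x + h x) \<le> 2 * L2_norm_sq f + 2 * L2_norm_sq h"
proof -
  have s: "is_H1_deriv (\<lambda>x. 1 * f x + 1 * h x) (\<lambda>x. 1 * g1 x + 1 * g2 x)" by (rule H1_lin[OF f h])
  have i1: "set_integrable lebesgue {0<..<1} (\<lambda>x. (cmod (f x + h x))^2)" using H1_L2_int[OF s] by simp
  have i2: "set_integrable lebesgue {0<..<1} (\<lambda>x. 2 * (cmod (f x))^2 + 2 * (cmod (h x))^2)"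
    using H1_L2_int[OF f] H1_L2_int[OF h] by (intro set_integral_add(1) set_integrable_mult_right)
  have "L2_norm_sq (\<lambda>x. f x + h x) \<le> set_lebesgue_integral lebesgue {0<..<1} (\<lambda>x. 2 * (cmod (f x))^2 + 2 * (cmod (h x))^2)"
    unfolding L2_norm_sq_def by (rule set_integral_mono[OF i1 i2]) (rule cmod_sq_add_le)
  also have "\<dots> = 2 * L2_norm_sq f + 2 * L2_norm_sq h"
    unfolding L2_norm_sq_def using H1_L2_int[OF f] H1_L2_int[OF h]
    by (simp add: set_integral_add(2) set_integrable_mult_right)
  finally show ?thesis .
qed

lemma LB:
  assumes us: "\<forall>j<k. us j \<in> Vspace p \<alpha> \<beta> \<theta>" and p: "\<forall>x. p x > 0"
    and ind: "\<forall>c. (\<forall>x. (\<Sum>j<k. c j * us j x) = 0) \<longrightarrow> (\<forall>j<k. c j = 0)"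
  shows "\<exists>m>0. \<forall>c. m * Ssq k c \<le> L2_norm_sq (vc k us c)"
proof (rule ccontr)
  assume "\<not> (\<exists>m>0. \<forall>c. m * Ssq k c \<le> L2_norm_sq (vc k us c))"
  then have H: "\<forall>n. \<exists>c. L2_norm_sq (vc k us c) < Ssq k c / real (Suc n)"
    by (metis divide_inverse inverse_positive_iff_positive mult.commute not_le of_nat_0_less_iff zero_less_Suc)
  then obtain C where C: "\<And>n. L2_norm_sq (vc k us (C n)) < Ssq k (C n) / real (Suc n)"
    by metis
  have SC: "Ssq k (C n) > 0" for n
  proof -
    have "0 \<le> L2_norm_sq (vc k us (C n))" by (rule L2_nonneg)
    then have "0 < Ssq k (C n) / real (Suc n)" using C[of n] by linarith
    then show ?thesis by (simp add: zero_less_divide_iff)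
  qed
  define a where "a n = inverse (complex_of_real (sqrt (Ssq k (C n))))" for n
  define d where "d n j = a n * C n j" for n j
  have na: "(cmod (a n))^2 = 1 / Ssq k (C n)" for n
    unfolding a_def using SC[of n] by (simp add: norm_inverse power_inverse divide_inverse)
  have d1: "Ssq k (d n) = 1" for n
  proof -
    have "Ssq k (d n) = (cmod (a n))^2 * Ssq k (C n)"
      unfolding Ssq_def d_def by (simp add: norm_mult power_mult_distrib sum_distrib_left)
    then show ?thesis using na[of n] SC[of n] by simp
  qed
  have d2: "L2_norm_sq (vc k us (d n)) < 1 / real (Suc n)" for n
  proof -
    have "vc k us (d n) = (\<lambda>x. a n * vc k us (C n) x)"
      unfolding d_def by (rule vc_scale)
    then have "L2_norm_sq (vc k us (d n)) = L2_norm_sq (vc k us (C n)) / Ssq k (C n)"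
      using na[of n] by (simp add: L2_scale)
    also have "\<dots> < (Ssq k (C n) / real (Suc n)) / Ssq k (C n)"
      using C[of n] SC[of n] by (intro divide_strict_right_mono) auto
    also have "\<dots> = 1 / real (Suc n)" using SC[of n] by simp
    finally show ?thesis .
  qed
  have d3: "cmod (d n j) \<le> 1" if "j < k" for n j
  proof -
    have "(cmod (d n j))^2 \<le> 1^2" using Ssq_ge[OF that, of "d n"] d1[of n] by simp
    then show ?thesis by (rule power2_le_imp_le) simp
  qed
  obtain r L where r: "strict_mono r" and L: "\<forall>j<k. (\<lambda>n. d (r n) j) \<longlonglongrightarrow> L j"
    using subseq_conv[of k d] d3 by blast
  have "(\<lambda>n. Ssq k (d (r n))) \<longlonglongrightarrow> Ssq k L"
    unfolding Ssq_def by (intro tendsto_sum tendsto_power tendsto_norm) (use L in auto)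
  then have "Ssq k L = 1" using d1 by (simp add: LIMSEQ_const_iff)
  then have "\<exists>j<k. L j \<noteq> 0"
    unfolding Ssq_def by (metis (no_types, lifting) lessThan_iff norm_zero power_zero_numeral sum.neutral zero_neq_one)
  then have Lpos: "L2_norm_sq (vc k us L) > 0" by (rule L2pos_span[OF us p ind])
  define N where "N j = L2_norm_sq (us j)" for j
  define b where "b n = 2 * inverse (real (Suc (r n))) + 2 * (real k * (\<Sum>j<k. (cmod (L j - d (r n) j))^2 * N j))" for n
  have bound: "L2_norm_sq (vc k us L) \<le> b n" for n
  proof -
    have e: "vc k us L = (\<lambda>x. vc k us (d (r n)) x + vc k us (\<lambda>j. L j - d (r n) j) x)"
      unfolding vc_def by (auto simp: sum.distrib[symmetric] algebra_simps)
    obtain g1 where g1: "is_H1_deriv (vc k us (d (r n))) g1" using V_H1[OF vc_V[OF us p] p] .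
    obtain g2 where g2: "is_H1_deriv (vc k us (\<lambda>j. L j - d (r n) j)) g2" using V_H1[OF vc_V[OF us p] p] .
    have "L2_norm_sq (vc k us L) \<le> 2 * L2_norm_sq (vc k us (d (r n))) + 2 * L2_norm_sq (vc k us (\<lambda>j. L j - d (r n) j))"
      unfolding e by (rule L2_add_le[OF g1 g2])
    also have "\<dots> \<le> b n"
      unfolding b_def N_def using d2[of "r n"] L2_vc_bound[OF us p, of "\<lambda>j. L j - d (r n) j"]
      by (simp add: divide_inverse)
    finally show ?thesis .
  qed
  have "b \<longlonglongrightarrow> 2 * 0 + 2 * (real k * (\<Sum>j<k. (cmod (L j - L j))^2 * N j))"
    unfolding b_def
  proof (intro tendsto_add tendsto_mult tendsto_const tendsto_sum tendsto_power tendsto_norm tendsto_diff)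
    show "(\<lambda>n. inverse (real (Suc (r n)))) \<longlonglongrightarrow> 0"
      using LIMSEQ_subseq_LIMSEQ[OF LIMSEQ_inverse_real_of_nat r] by (simp add: o_def)
    fix j assume "j \<in> {..<k}"
    then show "(\<lambda>n. d (r n) j) \<longlonglongrightarrow> L j" using L by blast
  qed
  then have "b \<longlonglongrightarrow> 0" by simp
  then have "L2_norm_sq (vc k us L) \<le> 0"
    by (rule LIMSEQ_le_const) (use bound in blast)
  then show False using Lpos by simp
qed

lemma EB:
  fixes p :: "real \<Rightarrow> real"
  assumes ab: "0 < \<alpha>" "\<alpha> < \<beta>" "\<beta> < 1"
    and pm: "p \<in> borel_measurable lebesgue" and pp: "\<forall>x. p x > 0"
    and pM: "AE x in lebesgue. x \<in> {0<..<1} \<longrightarrow> p x \<le> M"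
    and us: "\<forall>j<k. us j \<in> Vspace p \<alpha> \<beta> \<theta>"
  shows "energy p \<alpha> \<beta> (vc k us c) \<le> real k * Ssq k c * (\<Sum>j<k. energy p \<alpha> \<beta> (us j))"
proof -
  obtain gs where gs: "\<And>j. j < k \<Longrightarrow> is_H1_deriv (us j) (gs j)"
    using gs_choice[OF us pp] by metis
  have G: "is_H1_deriv (vc k us c) (\<lambda>x. \<Sum>j<k. c j * gs j x)"
    unfolding vc_def by (rule H1_sum) (use gs in blast)
  have ab0: "0 \<le> \<alpha>" "\<beta> \<le> 1" using ab by auto
  have Ev: "energy p \<alpha> \<beta> (vc k us c) = set_lebesgue_integral lebesgue {\<alpha><..<\<beta>} (\<lambda>x. p x * (cmod (\<Sum>j<k. c j * gs j x))^2)"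
    by (rule energy_eq[OF G ab0 pm])
  have Ej: "energy p \<alpha> \<beta> (us j) = set_lebesgue_integral lebesgue {\<alpha><..<\<beta>} (\<lambda>x. p x * (cmod (gs j x))^2)" if "j < k" for j
    by (rule energy_eq[OF gs[OF that] ab0 pm])
  have ij: "set_integrable lebesgue {\<alpha><..<\<beta>} (\<lambda>x. p x * (cmod (gs j x))^2)" if "j < k" for j
    by (rule PI[OF pm pM H1_meas[OF gs[OF that]] H1_sq[OF gs[OF that]] ab0 pp])
  have ijs: "\<forall>j\<in>{..<k}. set_integrable lebesgue {\<alpha><..<\<beta>} (\<lambda>x. real k * Ssq k c * (p x * (cmod (gs j x))^2))"
    using ij by (auto intro!: set_integrable_mult_right)
  have "energy p \<alpha> \<beta> (vc k us c) \<le> set_lebesgue_integral lebesgue {\<alpha><..<\<beta>} (\<lambda>x. \<Sum>j<k. real k * Ssq k c * (p x * (cmod (gs j x))^2))"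
    unfolding Ev
  proof (rule set_integral_mono)
    show "set_integrable lebesgue {\<alpha><..<\<beta>} (\<lambda>x. p x * (cmod (\<Sum>j<k. c j * gs j x))^2)"
      by (rule PI[OF pm pM H1_meas[OF G] H1_sq[OF G] ab0 pp])
    show "set_integrable lebesgue {\<alpha><..<\<beta>} (\<lambda>x. \<Sum>j<k. real k * Ssq k c * (p x * (cmod (gs j x))^2))"
      by (rule set_integrable_sum'[OF _ ijs]) simp
    fix x
    have px: "p x > 0" using pp by blast
    have "(cmod (\<Sum>j<k. c j * gs j x))^2 \<le> real k * (\<Sum>j<k. (cmod (c j * gs j x))^2)" by (rule CS)
    also have "\<dots> \<le> real k * (\<Sum>j<k. Ssq k c * (cmod (gs j x))^2)"
    proof (intro mult_left_mono sum_mono)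
      fix j assume "j \<in> {..<k}"
      then have "(cmod (c j))^2 \<le> Ssq k c" by (intro Ssq_ge) auto
      then show "(cmod (c j * gs j x))^2 \<le> Ssq k c * (cmod (gs j x))^2"
        by (simp add: norm_mult power_mult_distrib mult_right_mono)
    qed simp
    finally have "p x * (cmod (\<Sum>j<k. c j * gs j x))^2 \<le> p x * (real k * (\<Sum>j<k. Ssq k c * (cmod (gs j x))^2))"
      using px by (intro mult_left_mono) auto
    then show "p x * (cmod (\<Sum>j<k. c j * gs j x))^2 \<le> (\<Sum>j<k. real k * Ssq k c * (p x * (cmod (gs j x))^2))"
      by (simp add: sum_distrib_left algebra_simps)
  qed
  also have "\<dots> = (\<Sum>j<k. set_lebesgue_integral lebesgue {\<alpha><..<\<beta>} (\<lambda>x. real k * Ssq k c * (p x * (cmod (gs j x))^2)))"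
    by (rule set_integral_sum'[OF _ ijs]) simp
  also have "\<dots> = real k * Ssq k c * (\<Sum>j<k. energy p \<alpha> \<beta> (us j))"
    by (simp add: sum_distrib_left Ej)
  finally show ?thesis .
qed

lemma rayleigh_nonneg: "\<forall>x. p x > 0 \<Longrightarrow> rayleigh p \<alpha> \<beta> u \<ge> 0"
  unfolding rayleigh_def using energy_nonneg L2_nonneg by (simp add: divide_nonneg_nonneg)

lemma RS_props:
  fixes p :: "real \<Rightarrow> real"
  assumes ab: "0 < \<alpha>" "\<alpha> < \<beta>" "\<beta> < 1"
    and pm: "p \<in> borel_measurable lebesgue" and pp: "\<forall>x. p x > 0"
    and pM: "AE x in lebesgue. x \<in> {0<..<1} \<longrightarrow> p x \<le> M"
    and us: "\<forall>j<k. us j \<in> Vspace p \<alpha> \<beta> \<theta>"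
    and ind: "\<forall>c. (\<forall>x. (\<Sum>j<k. c j * us j x) = 0) \<longrightarrow> (\<forall>j<k. c j = 0)"
    and k: "k \<ge> 1"
  defines "RS \<equiv> {rayleigh p \<alpha> \<beta> (\<lambda>x. \<Sum>j<k. c j * us j x) | c :: nat \<Rightarrow> complex. \<exists>j<k. c j \<noteq> 0}"
  shows "bdd_above RS" "RS \<noteq> {}" "\<forall>r\<in>RS. 0 \<le> r"
proof -
  obtain m where m: "m > 0" "\<And>c. m * Ssq k c \<le> L2_norm_sq (vc k us c)"
    using LB[OF us pp ind] by blast
  define B where "B = real k * (\<Sum>j<k. energy p \<alpha> \<beta> (us j)) / m"
  have "\<forall>r\<in>RS. r \<le> B"
  proof
    fix r assume "r \<in> RS"
    then obtain c where r: "r = rayleigh p \<alpha> \<beta> (vc k us c)" and c: "\<exists>j<k. c j \<noteq> 0"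
      unfolding RS_def vc_def by blast
    have S: "Ssq k c > 0" by (rule Ssq_pos[OF c])
    have E0: "energy p \<alpha> \<beta> (vc k us c) \<ge> 0" by (rule energy_nonneg[OF pp])
    have "r \<le> (real k * Ssq k c * (\<Sum>j<k. energy p \<alpha> \<beta> (us j))) / (m * Ssq k c)"
      unfolding r rayleigh_def
      by (rule frac_le[OF _ EB[OF ab pm pp pM us] _ m(2)]) (use E0 EB[OF ab pm pp pM us, of c] m S in auto)
    also have "\<dots> = B" unfolding B_def using S m by (simp add: field_simps)
    finally show "r \<le> B" .
  qed
  then show "bdd_above RS" by (auto intro: bdd_aboveI)
  show "RS \<noteq> {}"
  proof -
    have "rayleigh p \<alpha> \<beta> (\<lambda>x. \<Sum>j<k. (\<lambda>_. 1) j * us j x) \<in> RS"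
      unfolding RS_def using k by (intro CollectI exI[of _ "\<lambda>_. 1"]) (auto intro: exI[of _ 0])
    then show ?thesis by blast
  qed
  show "\<forall>r\<in>RS. 0 \<le> r" unfolding RS_def using rayleigh_nonneg[OF pp] by blast
qed

definition RSet :: "(real \<Rightarrow> real) \<Rightarrow> real \<Rightarrow> real \<Rightarrow> nat \<Rightarrow> (nat \<Rightarrow> real \<Rightarrow> complex) \<Rightarrow> real set" where
  "RSet p \<alpha> \<beta> k us = {rayleigh p \<alpha> \<beta> (\<lambda>x. \<Sum>j<k. c j * us j x) | c :: nat \<Rightarrow> complex. \<exists>j<k. c j \<noteq> 0}"

definition adm :: "(real \<Rightarrow> real) \<Rightarrow> real \<Rightarrow> real \<Rightarrow> real \<Rightarrow> nat \<Rightarrow> (nat \<Rightarrow> real \<Rightarrow> complex) \<Rightarrow> bool" where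
  "adm p \<alpha> \<beta> \<theta> k us \<longleftrightarrow> (\<forall>j<k. us j \<in> Vspace p \<alpha> \<beta> \<theta>) \<and>
            (\<forall>c :: nat \<Rightarrow> complex. (\<forall>x. (\<Sum>j<k. c j * us j x) = 0) \<longrightarrow> (\<forall>j<k. c j = 0))"

lemma eig_eq: "eigenvalue p \<alpha> \<beta> \<theta> k = Inf {Sup (RSet p \<alpha> \<beta> k us) | us. adm p \<alpha> \<beta> \<theta> k us}"
  unfolding eigenvalue_def RSet_def adm_def by simp

lemma om_norm: "cmod (om t) = 1"
  unfolding om_def by (simp add: norm_exp_eq_Re)

lemma s_sym: "cmod (om (- d) - 1) = cmod (om d - 1)"
proof -
  have "om (- d) * om d = 1" using om_add[of "-d" d] by (simp add: om_def)
  then have "om (- d) - 1 = om (- d) * (1 - om d)" by (simp add: algebra_simps)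
  then have "cmod (om (- d) - 1) = cmod (1 - om d)" by (simp add: norm_mult om_norm)
  also have "\<dots> = cmod (om d - 1)" by (simp add: norm_minus_commute)
  finally show ?thesis .
qed

lemma om_cont: "isCont om t"
  unfolding om_def by (intro continuous_intros)

lemma adm_transfer:
  assumes ab: "0 < \<alpha>" "\<alpha> < \<beta>" "\<beta> < 1" and pp: "\<forall>x. p x > 0"
    and a: "adm p \<alpha> \<beta> \<theta> k us"
  shows "adm p \<alpha> \<beta> (\<theta> + \<delta>) k (\<lambda>j. Tm \<alpha> \<beta> (om \<delta> - 1) (us j))"
proof -
  have ab0: "0 \<le> \<alpha>" "\<alpha> < \<beta>" "\<beta> \<le> 1" using ab by auto
  have us: "\<forall>j<k. us j \<in> Vspace p \<alpha> \<beta> \<theta>" and ind: "\<forall>c :: nat \<Rightarrow> complex. (\<forall>x. (\<Sum>j<k. c j * us j x) = 0) \<longrightarrow> (\<forall>j<k. c j = 0)"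
    using a unfolding adm_def by auto
  show ?thesis unfolding adm_def
  proof (intro conjI allI impI)
    fix j assume "j < k"
    then show "Tm \<alpha> \<beta> (om \<delta> - 1) (us j) \<in> Vspace p \<alpha> \<beta> (\<theta> + \<delta>)"
      using Tm_V[OF ab0 pp] us by blast
  next
    fix c :: "nat \<Rightarrow> complex" and j
    assume z: "\<forall>x. (\<Sum>j<k. c j * Tm \<alpha> \<beta> (om \<delta> - 1) (us j) x) = 0" and j: "j < k"
    have "\<forall>x. Tm \<alpha> \<beta> (om \<delta> - 1) (\<lambda>x. \<Sum>j<k. c j * us j x) x = 0"
      using z by (simp add: Tm_sum)
    then have "\<forall>x. (\<Sum>j<k. c j * us j x) = 0"
      using Tm_inj[OF ab0] by blast
    then show "c j = 0" using ind j by blast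
  qed
qed

lemma sup_nonneg:
  assumes "bdd_above S" "S \<noteq> {}" "\<forall>r\<in>S. (0::real) \<le> r"
  shows "0 \<le> Sup S"
proof -
  obtain r where "r \<in> S" using assms(2) by blast
  then have "r \<le> Sup S" using assms(1) by (rule cSup_upper)
  then show ?thesis using assms(3) \<open>r \<in> S\<close> by force
qed

lemma sup_transfer:
  fixes p :: "real \<Rightarrow> real"
  assumes ab: "0 < \<alpha>" "\<alpha> < \<beta>" "\<beta> < 1"
    and pm: "p \<in> borel_measurable lebesgue" and pp: "\<forall>x. p x > 0"
    and pM: "AE x in lebesgue. x \<in> {0<..<1} \<longrightarrow> p x \<le> M" and M0: "M \<ge> 0"
    and k: "k \<ge> 1" and a: "adm p \<alpha> \<beta> \<theta> k us"
    and s: "s = (cmod (om \<delta> - 1))^2" and e: "\<eta> = sqrt s" and t: "t = s + \<eta>" and D: "D = 1 - t / (1 - \<beta>)"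
    and Dp: "D > 0"
  shows "Sup (RSet p \<alpha> \<beta> k (\<lambda>j. Tm \<alpha> \<beta> (om \<delta> - 1) (us j)))
     \<le> (1 + \<eta>)^2 / D * Sup (RSet p \<alpha> \<beta> k us) + (1 + \<eta>) * t / (1 - \<beta>) * (M / (\<beta> - \<alpha>)) / D"
proof -
  have us: "\<forall>j<k. us j \<in> Vspace p \<alpha> \<beta> \<theta>" and ind: "\<forall>c :: nat \<Rightarrow> complex. (\<forall>x. (\<Sum>j<k. c j * us j x) = 0) \<longrightarrow> (\<forall>j<k. c j = 0)"
    using a unfolding adm_def by auto
  have a': "adm p \<alpha> \<beta> (\<theta> + \<delta>) k (\<lambda>j. Tm \<alpha> \<beta> (om \<delta> - 1) (us j))"
    by (rule adm_transfer[OF ab pp a])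
  have us': "\<forall>j<k. Tm \<alpha> \<beta> (om \<delta> - 1) (us j) \<in> Vspace p \<alpha> \<beta> (\<theta> + \<delta>)"
    and ind': "\<forall>c :: nat \<Rightarrow> complex. (\<forall>x. (\<Sum>j<k. c j * Tm \<alpha> \<beta> (om \<delta> - 1) (us j) x) = 0) \<longrightarrow> (\<forall>j<k. c j = 0)"
    using a' unfolding adm_def by auto
  note P = RS_props[OF ab pm pp pM us ind k]
  note P' = RS_props[OF ab pm pp pM us' ind' k]
  have e0: "\<eta> \<ge> 0" using e s by simp
  have AA0: "(1 + \<eta>)^2 / D \<ge> 0" using Dp by simp
  show ?thesis
  proof (rule cSup_least)
    show "RSet p \<alpha> \<beta> k (\<lambda>j. Tm \<alpha> \<beta> (om \<delta> - 1) (us j)) \<noteq> {}"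
      unfolding RSet_def using P'(2) by simp
    fix r assume "r \<in> RSet p \<alpha> \<beta> k (\<lambda>j. Tm \<alpha> \<beta> (om \<delta> - 1) (us j))"
    then obtain c where r: "r = rayleigh p \<alpha> \<beta> (\<lambda>x. \<Sum>j<k. c j * Tm \<alpha> \<beta> (om \<delta> - 1) (us j) x)"
      and c: "\<exists>j<k. c j \<noteq> 0"
      unfolding RSet_def by blast
    have fe: "(\<lambda>x. \<Sum>j<k. c j * Tm \<alpha> \<beta> (om \<delta> - 1) (us j) x) = Tm \<alpha> \<beta> (om \<delta> - 1) (vc k us c)"
      unfolding vc_def by (rule ext) (simp only: Tm_sum)
    have V: "vc k us c \<in> Vspace p \<alpha> \<beta> \<theta>" by (rule vc_V[OF us pp])
    have Lp: "L2_norm_sq (vc k us c) > 0" by (rule L2pos_span[OF us pp ind c])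
    have "r \<le> (1 + \<eta>)^2 / D * rayleigh p \<alpha> \<beta> (vc k us c) + (1 + \<eta>) * t / (1 - \<beta>) * (M / (\<beta> - \<alpha>)) / D"
      unfolding r fe by (rule est[OF ab pm pp pM M0 V Lp s e t D Dp])
    also have "rayleigh p \<alpha> \<beta> (vc k us c) \<le> Sup (RSet p \<alpha> \<beta> k us)"
    proof (rule cSup_upper)
      show "rayleigh p \<alpha> \<beta> (vc k us c) \<in> RSet p \<alpha> \<beta> k us"
        unfolding RSet_def vc_def using c by blast
      show "bdd_above (RSet p \<alpha> \<beta> k us)" unfolding RSet_def using P(1) by simp
    qed
    then have "(1 + \<eta>)^2 / D * rayleigh p \<alpha> \<beta> (vc k us c) \<le> (1 + \<eta>)^2 / D * Sup (RSet p \<alpha> \<beta> k us)"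
      using AA0 by (rule mult_left_mono)
    finally show "r \<le> (1 + \<eta>)^2 / D * Sup (RSet p \<alpha> \<beta> k us) + (1 + \<eta>) * t / (1 - \<beta>) * (M / (\<beta> - \<alpha>)) / D"
      by simp
  qed
qed

lemma A_nonneg:
  fixes p :: "real \<Rightarrow> real"
  assumes ab: "0 < \<alpha>" "\<alpha> < \<beta>" "\<beta> < 1"
    and pm: "p \<in> borel_measurable lebesgue" and pp: "\<forall>x. p x > 0"
    and pM: "AE x in lebesgue. x \<in> {0<..<1} \<longrightarrow> p x \<le> M" and k: "k \<ge> 1"
    and a: "adm p \<alpha> \<beta> \<theta> k us"
  shows "0 \<le> Sup (RSet p \<alpha> \<beta> k us)"
proof -
  have us: "\<forall>j<k. us j \<in> Vspace p \<alpha> \<beta> \<theta>" and ind: "\<forall>c :: nat \<Rightarrow> complex. (\<forall>x. (\<Sum>j<k. c j * us j x) = 0) \<longrightarrow> (\<forall>j<k. c j = 0)"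
    using a unfolding adm_def by auto
  note P = RS_props[OF ab pm pp pM us ind k]
  show ?thesis unfolding RSet_def by (rule sup_nonneg[OF P])
qed

lemma eig_transfer:
  fixes p :: "real \<Rightarrow> real"
  assumes ab: "0 < \<alpha>" "\<alpha> < \<beta>" "\<beta> < 1"
    and pm: "p \<in> borel_measurable lebesgue" and pp: "\<forall>x. p x > 0"
    and pM: "AE x in lebesgue. x \<in> {0<..<1} \<longrightarrow> p x \<le> M" and M0: "M \<ge> 0"
    and k: "k \<ge> 1"
    and N: "{Sup (RSet p \<alpha> \<beta> k us) | us. adm p \<alpha> \<beta> \<theta> k us} \<noteq> {}"
    and s: "s = (cmod (om \<delta> - 1))^2" and e: "\<eta> = sqrt s" and t: "t = s + \<eta>" and D: "D = 1 - t / (1 - \<beta>)"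
    and Dp: "D > 0"
  shows "eigenvalue p \<alpha> \<beta> (\<theta> + \<delta>) k
     \<le> (1 + \<eta>)^2 / D * eigenvalue p \<alpha> \<beta> \<theta> k + (1 + \<eta>) * t / (1 - \<beta>) * (M / (\<beta> - \<alpha>)) / D"
proof -
  define AA where "AA = (1 + \<eta>)^2 / D"
  define BB where "BB = (1 + \<eta>) * t / (1 - \<beta>) * (M / (\<beta> - \<alpha>)) / D"
  have e0: "\<eta> \<ge> 0" using e s by simp
  have AAp: "AA > 0" unfolding AA_def using Dp e0 by simp
  define lam' where "lam' = eigenvalue p \<alpha> \<beta> (\<theta> + \<delta>) k"
  have bb: "bdd_below {Sup (RSet p \<alpha> \<beta> k us) | us. adm p \<alpha> \<beta> (\<theta> + \<delta>) k us}"
    by (rule bdd_belowI[of _ 0]) (use A_nonneg[OF ab pm pp pM k] in blast)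
  have "(lam' - BB) / AA \<le> Inf {Sup (RSet p \<alpha> \<beta> k us) | us. adm p \<alpha> \<beta> \<theta> k us}"
  proof (rule cInf_greatest[OF N])
    fix x assume "x \<in> {Sup (RSet p \<alpha> \<beta> k us) | us. adm p \<alpha> \<beta> \<theta> k us}"
    then obtain us where x: "x = Sup (RSet p \<alpha> \<beta> k us)" and a: "adm p \<alpha> \<beta> \<theta> k us" by blast
    have a': "adm p \<alpha> \<beta> (\<theta> + \<delta>) k (\<lambda>j. Tm \<alpha> \<beta> (om \<delta> - 1) (us j))"
      by (rule adm_transfer[OF ab pp a])
    have "lam' \<le> Sup (RSet p \<alpha> \<beta> k (\<lambda>j. Tm \<alpha> \<beta> (om \<delta> - 1) (us j)))"
      unfolding lam'_def eig_eq by (rule cInf_lower[OF _ bb]) (use a' in blast)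
    also have "\<dots> \<le> AA * x + BB"
      unfolding AA_def BB_def x by (rule sup_transfer[OF ab pm pp pM M0 k a s e t D Dp])
    finally show "(lam' - BB) / AA \<le> x" using AAp by (simp add: divide_le_eq mult.commute)
  qed
  then have "(lam' - BB) / AA \<le> eigenvalue p \<alpha> \<beta> \<theta> k" by (simp add: eig_eq)
  then have "lam' \<le> AA * eigenvalue p \<alpha> \<beta> \<theta> k + BB" using AAp by (simp add: divide_le_eq mult.commute)
  then show ?thesis unfolding lam'_def AA_def BB_def .
qed

lemma N_transfer:
  assumes ab: "0 < \<alpha>" "\<alpha> < \<beta>" "\<beta> < 1" and pp: "\<forall>x. p x > 0"
    and N: "{Sup (RSet p \<alpha> \<beta> k us) | us. adm p \<alpha> \<beta> \<theta> k us} \<noteq> {}"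
  shows "{Sup (RSet p \<alpha> \<beta> k us) | us. adm p \<alpha> \<beta> \<theta>' k us} \<noteq> {}"
proof -
  obtain us where a: "adm p \<alpha> \<beta> \<theta> k us" using N by blast
  have "adm p \<alpha> \<beta> (\<theta> + (\<theta>' - \<theta>)) k (\<lambda>j. Tm \<alpha> \<beta> (om (\<theta>' - \<theta>) - 1) (us j))"
    by (rule adm_transfer[OF ab pp a])
  then show ?thesis by auto
qed

lemma eig_cont_at:
  fixes p :: "real \<Rightarrow> real"
  assumes ab: "0 < \<alpha>" "\<alpha> < \<beta>" "\<beta> < 1"
    and pm: "p \<in> borel_measurable lebesgue" and pp: "\<forall>x. p x > 0"
    and pM: "AE x in lebesgue. x \<in> {0<..<1} \<longrightarrow> p x \<le> M" and M0: "M \<ge> 0"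
    and k: "k \<ge> 1"
    and N: "\<And>\<theta>. {Sup (RSet p \<alpha> \<beta> k us) | us. adm p \<alpha> \<beta> \<theta> k us} \<noteq> {}"
  shows "isCont (\<lambda>\<theta>. eigenvalue p \<alpha> \<beta> \<theta> k) \<theta>0"
proof -
  define f where "f \<theta> = eigenvalue p \<alpha> \<beta> \<theta> k" for \<theta>
  define s where "s \<theta> = (cmod (om (\<theta> - \<theta>0) - 1))^2" for \<theta>
  define \<eta> where "\<eta> \<theta> = sqrt (s \<theta>)" for \<theta>
  define t where "t \<theta> = s \<theta> + \<eta> \<theta>" for \<theta>
  define D where "D \<theta> = 1 - t \<theta> / (1 - \<beta>)" for \<theta>
  define AA where "AA \<theta> = (1 + \<eta> \<theta>)^2 / D \<theta>" for \<theta>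
  define BB where "BB \<theta> = (1 + \<eta> \<theta>) * t \<theta> / (1 - \<beta>) * (M / (\<beta> - \<alpha>)) / D \<theta>" for \<theta>
  have om0: "om 0 = 1" unfolding om_def by simp
  have sc: "isCont s \<theta>0" unfolding s_def by (intro continuous_intros om_cont[THEN isCont_o2[rotated]])
  have "(s \<longlongrightarrow> s \<theta>0) (at \<theta>0)" using sc by (simp add: isCont_def)
  then have sl: "(s \<longlongrightarrow> 0) (at \<theta>0)" by (simp add: s_def om0)
  have el: "(\<eta> \<longlongrightarrow> 0) (at \<theta>0)" unfolding \<eta>_def using tendsto_real_sqrt[OF sl] by simp
  have tl: "(t \<longlongrightarrow> 0) (at \<theta>0)" unfolding t_def using tendsto_add[OF sl el] by simp
  have Dl: "(D \<longlongrightarrow> 1) (at \<theta>0)" unfolding D_def using tendsto_diff[OF tendsto_const tendsto_divide[OF tl tendsto_const]] ab by simp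
  have "((\<lambda>\<theta>. (1 + \<eta> \<theta>)^2 / D \<theta>) \<longlongrightarrow> (1 + 0)^2 / 1) (at \<theta>0)"
    by (intro tendsto_intros el Dl) simp
  then have AAl: "(AA \<longlongrightarrow> 1) (at \<theta>0)" unfolding AA_def by simp
  have "(BB \<longlongrightarrow> (1 + 0) * 0 / (1 - \<beta>) * (M / (\<beta> - \<alpha>)) / 1) (at \<theta>0)"
    unfolding BB_def by (intro tendsto_intros el Dl tl) (use ab in simp_all)
  then have BBl: "(BB \<longlongrightarrow> 0) (at \<theta>0)" by simp
  have evD: "eventually (\<lambda>\<theta>. D \<theta> > 0) (at \<theta>0)"
    using order_tendstoD(1)[OF Dl, of 0] by simp
  have upper: "eventually (\<lambda>\<theta>. f \<theta> \<le> AA \<theta> * f \<theta>0 + BB \<theta>) (at \<theta>0)"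
    using evD
  proof eventually_elim
    case (elim \<theta>)
    have "eigenvalue p \<alpha> \<beta> (\<theta>0 + (\<theta> - \<theta>0)) k \<le> (1 + \<eta> \<theta>)^2 / D \<theta> * eigenvalue p \<alpha> \<beta> \<theta>0 k + (1 + \<eta> \<theta>) * t \<theta> / (1 - \<beta>) * (M / (\<beta> - \<alpha>)) / D \<theta>"
      by (rule eig_transfer[OF ab pm pp pM M0 k N]) (use elim in \<open>auto simp: s_def \<eta>_def t_def D_def\<close>)
    then show ?case unfolding f_def AA_def BB_def by simp
  qed
  have lower: "eventually (\<lambda>\<theta>. (f \<theta>0 - BB \<theta>) / AA \<theta> \<le> f \<theta>) (at \<theta>0)"
    using evD
  proof eventually_elim
    case (elim \<theta>)
    have ss: "s \<theta> = (cmod (om (\<theta>0 - \<theta>) - 1))^2"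
      unfolding s_def using s_sym[of "\<theta> - \<theta>0"] by simp
    have "eigenvalue p \<alpha> \<beta> (\<theta> + (\<theta>0 - \<theta>)) k \<le> (1 + \<eta> \<theta>)^2 / D \<theta> * eigenvalue p \<alpha> \<beta> \<theta> k + (1 + \<eta> \<theta>) * t \<theta> / (1 - \<beta>) * (M / (\<beta> - \<alpha>)) / D \<theta>"
      by (rule eig_transfer[OF ab pm pp pM M0 k N ss]) (use elim in \<open>auto simp: \<eta>_def t_def D_def\<close>)
    then have "f \<theta>0 \<le> AA \<theta> * f \<theta> + BB \<theta>" unfolding f_def AA_def BB_def by simp
    moreover have "AA \<theta> > 0"
    proof -
      have "1 + \<eta> \<theta> > 0" unfolding \<eta>_def s_def by (simp add: add_pos_nonneg)
      then show ?thesis unfolding AA_def using elim by simp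
    qed
    ultimately show ?case by (simp add: divide_le_eq mult.commute)
  qed
  have l1: "((\<lambda>\<theta>. (f \<theta>0 - BB \<theta>) / AA \<theta>) \<longlongrightarrow> f \<theta>0) (at \<theta>0)"
    using tendsto_divide[OF tendsto_diff[OF tendsto_const BBl] AAl] by simp
  have l2: "((\<lambda>\<theta>. AA \<theta> * f \<theta>0 + BB \<theta>) \<longlongrightarrow> f \<theta>0) (at \<theta>0)"
    using tendsto_add[OF tendsto_mult[OF AAl tendsto_const] BBl] by simp
  have "(f \<longlongrightarrow> f \<theta>0) (at \<theta>0)"
    by (rule tendsto_sandwich[OF lower upper l1 l2])
  then show ?thesis unfolding isCont_def f_def .
qed

theorem theorem5p2:
  fixes \<alpha> \<beta> :: real and p :: "real \<Rightarrow> real" and k :: nat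
  assumes "0 < \<alpha>" and "\<alpha> < \<beta>" and "\<beta> < 1"
    and "p \<in> borel_measurable lebesgue"
    and "\<forall>x. p (x + 1) = p x"
    and "\<forall>x. p x > 0"
    and "\<exists>M. AE x in lebesgue. x \<in> {0<..<1} \<longrightarrow> p x \<le> M \<and> 1 / p x \<le> M"
    and "k \<ge> 1"
  shows "continuous_on {0..<1} (\<lambda>\<theta>. eigenvalue p \<alpha> \<beta> \<theta> k)"
proof -
  note ab = assms(1-3) and pm = assms(4) and pp = assms(6) and k = assms(8)
  obtain M1 where M1: "AE x in lebesgue. x \<in> {0<..<1} \<longrightarrow> p x \<le> M1 \<and> 1 / p x \<le> M1"
    using assms(7) by blast
  define M where "M = max M1 0"
  have M0: "M \<ge> 0" unfolding M_def by simp
  have pM: "AE x in lebesgue. x \<in> {0<..<1} \<longrightarrow> p x \<le> M"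
    using M1 by eventually_elim (auto simp: M_def)
  show ?thesis
  proof (cases "{Sup (RSet p \<alpha> \<beta> k us) | us. adm p \<alpha> \<beta> 0 k us} = {}")
    case True
    have "\<And>\<theta>. {Sup (RSet p \<alpha> \<beta> k us) | us. adm p \<alpha> \<beta> \<theta> k us} = {}"
      using N_transfer[OF ab pp] True by blast
    then have e: "(\<lambda>\<theta>. eigenvalue p \<alpha> \<beta> \<theta> k) = (\<lambda>\<theta>. Inf {})"
      by (simp add: eig_eq)
    show ?thesis unfolding e by (rule continuous_on_const)
  next
    case False
    have N: "\<And>\<theta>. {Sup (RSet p \<alpha> \<beta> k us) | us. adm p \<alpha> \<beta> \<theta> k us} \<noteq> {}"
      using N_transfer[OF ab pp False] by blast
    have "\<forall>\<theta>0\<in>{0..<1}. isCont (\<lambda>\<theta>. eigenvalue p \<alpha> \<beta> \<theta> k) \<theta>0"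
      using eig_cont_at[OF ab pm pp pM M0 k N] by blast
    then show ?thesis by (rule continuous_at_imp_continuous_on)
  qed
qed

end
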